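(* Let $X=\{x_1,\dots,x_n\}$ and $Z=\{z_1,\dots,z_n\}$ be sets with symmetric non-negative functions $d_X$, $d_Z$, and let $f_\bullet\colon X\to Z$ be the bijection $x_i\mapsto z_i$. For $\delta\in\mathbb{R}^+$ let $X^\delta$ be the set $X$ with the function $d_{X^\delta}(x,x')=d_X(x,x')+\delta$. If $\delta\in\mathbb{R}^+$ is big enough, then the maps $f^\delta_r\colon H_0(\mathrm{VR}_r(X^\delta))\to H_0(\mathrm{VR}_r(Z))$, $[x]\mapsto[f_\bullet(x)]$ ($r\in\mathbb{R}^+$), are well defined and form a persistence morphism $f^\delta\colon \mathrm{PH}_0(X^\delta)\to\mathrm{PH}_0(Z)$, and $f^\delta$ is isomorphic to \[ \Big(\bigoplus_{b\in\mathbb{R}^+}\bigoplus_{a\ge b}\bigoplus_{i=1}^{\mathcal{M}^0_{f^\delta}(a,b)}(\kappa^a\to\kappa^b)\Big)\oplus(\kappa^\infty\to\kappa^\infty). \]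
   Context: $\mathbb{R}^+=[0,\infty)$. For a finite set $Y=\{y_1,\dots,y_n\}$ with a symmetric non-negative function $d_Y$ (zero values between distinct points allowed; triangle inequality not required): $\mathrm{VR}_0(Y)$ is the graph on $Y$ with no edges, and for $r>0$, $\mathrm{VR}_r(Y)$ is the graph on $Y$ with an edge $[y,y']$ ($y\ne y'$) whenever $d_Y(y,y')\le r$. $H_0(\mathrm{VR}_r(Y))$ is the $\mathbb{Z}_2$-vector space freely generated by the connected components; $[y]$ is the class of $y$. $\mathrm{PH}_0(Y)$ is the persistence module $\{H_0(\mathrm{VR}_r(Y))\}_{r\in\mathbb{R}^+}$ with structure maps $\rho_{rs}$ ($r\le s$) induced by the inclusions $\mathrm{VR}_r(Y)\subseteq\mathrm{VR}_s(Y)$. A persistence module is a family of finite-dimensional $\mathbb{Z}_2$-vector spaces $V_r$, $r\in\mathbb{R}^+$, with linear maps $V_r\to V_s$ for $r\le s$ (compatible); a persistence morphism is a family of linear maps $V_r\to U_r$ commuting with the structure maps; a persistence isomorphism is one which is an isomorphism at each $r$. Two persistence morphisms $g\colon V\to U$, $g'\colon V'\to U'$ are isomorphic if there are persistence isomorphisms $\alpha\colon V\to V'$, $\beta\colon U\to U'$ with $\beta\circ g=g'\circ\alpha$; direct sums are taken pointwise. Interval modules: for $a>0$, $\kappa^a_r=\mathbb{Z}_2$ for $r<a$ and $0$ otherwise, with structure maps the identity when both spaces are $\mathbb{Z}_2$ and zero otherwise; $\kappa^0_0=\mathbb{Z}_2$ and $\kappa^0_r=0$ for $r>0$; $\kappa^\infty_r=\mathbb{Z}_2$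 for all $r$ with identity structure maps. For $a\ge b$, $\kappa^a\to\kappa^b$ is the persistence morphism that is the identity at those $r$ where both $\kappa^a_r$ and $\kappa^b_r$ equal $\mathbb{Z}_2$, and zero otherwise; $\kappa^\infty\to\kappa^\infty$ is the identity. For $r\ge 0$, $G_r(Y)$ is the graph on $Y$ with an edge $[y,y']$ ($y\neq y'$) whenever $d_Y(y,y')\le r$. For $b\ge0$, $\ker^+_b(Y)\subseteq H_0(\mathrm{VR}_0(Y))$ is the span of all $[y]+[y']$ with $y,y'$ in the same component of $G_b(Y)$; $\ker^-_0(Y)=0$ and for $b>0$, $\ker^-_b(Y)$ is the span of all $[y]+[y']$ with $y,y'$ in the same component of $G_r(Y)$ for some $0\le r<b$. With $f^\delta_0\colon H_0(\mathrm{VR}_0(X^\delta))\to H_0(\mathrm{VR}_0(Z))$ the isomorphism $[x_i]\mapsto[z_i]$, the induced block function is \[ \mathcal{M}^0_{f^\delta}(a,b)=\dim\frac{f^\delta_0(\ker^+_a(X^\delta))\cap\ker^+_b(Z)}{f^\delta_0(\ker^-_a(X^\delta))\cap\ker^+_b(Z)+f^\delta_0(\ker^+_a(X^\delta))\cap\ker^-_b(Z)},\quad a,b\in\mathbb{R}^+. \] *)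

theory Defs
  imports Main "HOL.Real"
begin

text \<open>A Z_2-vector space freely generated by a set of generators B is modelled
  as the finite subsets of B (a subset = the sum of its elements); addition is
  symmetric difference, zero is the empty set. Every finite-dimensional
  Z_2-vector space is isomorphic to one of these.\<close>

definition vsp :: "'g set \<Rightarrow> 'g set set" where
  "vsp B = {S. finite S \<and> S \<subseteq> B}"

definition zadd :: "'g set \<Rightarrow> 'g set \<Rightarrow> 'g set" where
  "zadd S T = (S - T) \<union> (T - S)"

definition zlinear :: "'g set \<Rightarrow> 'h set \<Rightarrow> ('g set \<Rightarrow> 'h set) \<Rightarrow> bool" where
  "zlinear B C f \<longleftrightarrow> (\<forall>S\<in>vsp B. f S \<in> vsp C) \<and>
     (\<forall>S\<in>vsp B. \<forall>T\<in>vsp B. f (zadd S T) = zadd (f S) (f T))"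

definition lin_ext :: "('g \<Rightarrow> 'h) \<Rightarrow> 'g set \<Rightarrow> 'h set" where
  "lin_ext g S = {D. odd (card {C\<in>S. g C = D})}"

definition zsum :: "'g set set \<Rightarrow> 'g set" where
  "zsum F = {x. odd (card {S\<in>F. x \<in> S})}"

definition zspan :: "'g set set \<Rightarrow> 'g set set" where
  "zspan A = {zsum F | F. finite F \<and> F \<subseteq> A}"

definition zdim :: "'g set set \<Rightarrow> nat" where
  "zdim V = (LEAST k. \<exists>B. finite B \<and> B \<subseteq> V \<and> card B = k \<and> zspan B = V)"

definition subspace_sum :: "'g set set \<Rightarrow> 'g set set \<Rightarrow> 'g set set" where
  "subspace_sum U W = {zadd u w | u w. u \<in> U \<and> w \<in> W}"

definition quot_dim :: "'g set set \<Rightarrow> 'g set set \<Rightarrow> nat" where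
  "quot_dim V W = zdim V - zdim W"

text \<open>A persistence module is given by generator sets B r (V_r = vsp (B r)) and
  structure maps rho r s; only indices r \<ge> 0 matter.\<close>
definition is_pmod :: "(real \<Rightarrow> 'g set) \<Rightarrow> (real \<Rightarrow> real \<Rightarrow> 'g set \<Rightarrow> 'g set) \<Rightarrow> bool" where
  "is_pmod B \<rho> \<longleftrightarrow>
     (\<forall>r\<ge>0. finite (B r)) \<and>
     (\<forall>r s. 0 \<le> r \<and> r \<le> s \<longrightarrow> zlinear (B r) (B s) (\<rho> r s)) \<and>
     (\<forall>r\<ge>0. \<forall>S\<in>vsp (B r). \<rho> r r S = S) \<and>
     (\<forall>r s t. 0 \<le> r \<and> r \<le> s \<and> s \<le> t \<longrightarrow> (\<forall>S\<in>vsp (B r). \<rho> s t (\<rho> r s S) = \<rho> r t S))"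

definition is_pmor ::
  "(real \<Rightarrow> 'g set) \<Rightarrow> (real \<Rightarrow> real \<Rightarrow> 'g set \<Rightarrow> 'g set) \<Rightarrow>
   (real \<Rightarrow> 'h set) \<Rightarrow> (real \<Rightarrow> real \<Rightarrow> 'h set \<Rightarrow> 'h set) \<Rightarrow>
   (real \<Rightarrow> 'g set \<Rightarrow> 'h set) \<Rightarrow> bool" where
  "is_pmor B \<rho> C \<sigma> g \<longleftrightarrow>
     (\<forall>r\<ge>0. zlinear (B r) (C r) (g r)) \<and>
     (\<forall>r s. 0 \<le> r \<and> r \<le> s \<longrightarrow> (\<forall>S\<in>vsp (B r). g s (\<rho> r s S) = \<sigma> r s (g r S)))"

definition is_piso ::
  "(real \<Rightarrow> 'g set) \<Rightarrow> (real \<Rightarrow> real \<Rightarrow> 'g set \<Rightarrow> 'g set) \<Rightarrow>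
   (real \<Rightarrow> 'h set) \<Rightarrow> (real \<Rightarrow> real \<Rightarrow> 'h set \<Rightarrow> 'h set) \<Rightarrow>
   (real \<Rightarrow> 'g set \<Rightarrow> 'h set) \<Rightarrow> bool" where
  "is_piso B \<rho> C \<sigma> g \<longleftrightarrow> is_pmor B \<rho> C \<sigma> g \<and>
     (\<forall>r\<ge>0. bij_betw (g r) (vsp (B r)) (vsp (C r)))"

definition pmor_isomorphic ::
  "(real \<Rightarrow> 'g set) \<Rightarrow> (real \<Rightarrow> real \<Rightarrow> 'g set \<Rightarrow> 'g set) \<Rightarrow>
   (real \<Rightarrow> 'h set) \<Rightarrow> (real \<Rightarrow> real \<Rightarrow> 'h set \<Rightarrow> 'h set) \<Rightarrow>
   (real \<Rightarrow> 'g set \<Rightarrow> 'h set) \<Rightarrow>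
   (real \<Rightarrow> 'k set) \<Rightarrow> (real \<Rightarrow> real \<Rightarrow> 'k set \<Rightarrow> 'k set) \<Rightarrow>
   (real \<Rightarrow> 'l set) \<Rightarrow> (real \<Rightarrow> real \<Rightarrow> 'l set \<Rightarrow> 'l set) \<Rightarrow>
   (real \<Rightarrow> 'k set \<Rightarrow> 'l set) \<Rightarrow> bool" where
  "pmor_isomorphic B \<rho> C \<sigma> g B' \<rho>' C' \<sigma>' g' \<longleftrightarrow>
     (\<exists>\<alpha> \<beta>. is_piso B \<rho> B' \<rho>' \<alpha> \<and> is_piso C \<sigma> C' \<sigma>' \<beta> \<and>
        (\<forall>r\<ge>0. \<forall>S\<in>vsp (B r). \<beta> r (g r S) = g' r (\<alpha> r S)))"

text \<open>Point sets are indexed by {..<n}; d is the symmetric non-negative function.\<close>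

definition gedges :: "(nat \<Rightarrow> nat \<Rightarrow> real) \<Rightarrow> nat \<Rightarrow> real \<Rightarrow> (nat \<times> nat) set" where
  "gedges d n r = {(i, j). i < n \<and> j < n \<and> i \<noteq> j \<and> d i j \<le> r}"

definition vredges :: "(nat \<Rightarrow> nat \<Rightarrow> real) \<Rightarrow> nat \<Rightarrow> real \<Rightarrow> (nat \<times> nat) set" where
  "vredges d n r = (if r > 0 then gedges d n r else {})"

definition vrcomp :: "(nat \<Rightarrow> nat \<Rightarrow> real) \<Rightarrow> nat \<Rightarrow> real \<Rightarrow> nat \<Rightarrow> nat set" where
  "vrcomp d n r i = {j. (i, j) \<in> (vredges d n r \<union> (vredges d n r)\<inverse>)\<^sup>*}"

text \<open>Generators of H_0(VR_r(Y)): the connected components.\<close>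
definition H0gen :: "(nat \<Rightarrow> nat \<Rightarrow> real) \<Rightarrow> nat \<Rightarrow> real \<Rightarrow> nat set set" where
  "H0gen d n r = vrcomp d n r ` {..<n}"

text \<open>Induced map on H_0: [y] (component C of VR_r(Y)) \<mapsto> [y] in VR_s(Y').\<close>
definition H0map :: "(nat \<Rightarrow> nat \<Rightarrow> real) \<Rightarrow> nat \<Rightarrow> real \<Rightarrow> nat set set \<Rightarrow> nat set set" where
  "H0map d' n s = lin_ext (\<lambda>C. vrcomp d' n s (SOME i. i \<in> C))"

definition PH0rho :: "(nat \<Rightarrow> nat \<Rightarrow> real) \<Rightarrow> nat \<Rightarrow> real \<Rightarrow> real \<Rightarrow> nat set set \<Rightarrow> nat set set" where
  "PH0rho d n r s = H0map d n s"

definition gconn :: "(nat \<Rightarrow> nat \<Rightarrow> real) \<Rightarrow> nat \<Rightarrow> real \<Rightarrow> nat \<Rightarrow> nat \<Rightarrow> bool" where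
  "gconn d n r i j \<longleftrightarrow> (i, j) \<in> (gedges d n r \<union> (gedges d n r)\<inverse>)\<^sup>*"

text \<open>H_0(VR_0(Y)) is identified with vsp {..<n} via [y_i] \<mapsto> {i}; so [y_i]+[y_j] = {i,j}.\<close>
definition ker_plus :: "(nat \<Rightarrow> nat \<Rightarrow> real) \<Rightarrow> nat \<Rightarrow> real \<Rightarrow> nat set set" where
  "ker_plus d n b = zspan {{i, j} | i j. i < n \<and> j < n \<and> i \<noteq> j \<and> gconn d n b i j}"

definition ker_minus :: "(nat \<Rightarrow> nat \<Rightarrow> real) \<Rightarrow> nat \<Rightarrow> real \<Rightarrow> nat set set" where
  "ker_minus d n b = (if b = 0 then {{}} else
     zspan {{i, j} | i j r. i < n \<and> j < n \<and> i \<noteq> j \<and> 0 \<le> r \<and> r < b \<and> gconn d n r i j})"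

text \<open>Block function M^0_f(a,b); f_0 is [x_i] \<mapsto> [z_i], i.e. the identity on indices.\<close>
definition block_fun :: "(nat \<Rightarrow> nat \<Rightarrow> real) \<Rightarrow> (nat \<Rightarrow> nat \<Rightarrow> real) \<Rightarrow> nat \<Rightarrow> real \<Rightarrow> real \<Rightarrow> nat" where
  "block_fun dX dZ n a b =
     quot_dim (ker_plus dX n a \<inter> ker_plus dZ n b)
       (subspace_sum (ker_minus dX n a \<inter> ker_plus dZ n b) (ker_plus dX n a \<inter> ker_minus dZ n b))"

text \<open>kappa^a_r = Z_2 (for finite a \<ge> 0, r \<ge> 0).\<close>
definition ivl :: "real \<Rightarrow> real \<Rightarrow> bool" where
  "ivl a r \<longleftrightarrow> (if a = 0 then r = 0 else r < a)"

text \<open>Generators of the direct sum: Some (a,b,i) for the i-th copy of kappa^a \<rightarrow> kappa^b,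
  None for kappa^infty \<rightarrow> kappa^infty.\<close>
definition blk_dom :: "(real \<Rightarrow> real \<Rightarrow> nat) \<Rightarrow> real \<Rightarrow> (real \<times> real \<times> nat) option set" where
  "blk_dom M r = {Some (a, b, i) | a b i. 0 \<le> b \<and> b \<le> a \<and> i < M a b \<and> ivl a r} \<union> {None}"

definition blk_cod :: "(real \<Rightarrow> real \<Rightarrow> nat) \<Rightarrow> real \<Rightarrow> (real \<times> real \<times> nat) option set" where
  "blk_cod M r = {Some (a, b, i) | a b i. 0 \<le> b \<and> b \<le> a \<and> i < M a b \<and> ivl b r} \<union> {None}"

text \<open>Structure maps of a direct sum of interval modules: identity on summands
  nonzero at both r and s, zero otherwise.\<close>
definition blk_dom_rho :: "(real \<Rightarrow> real \<Rightarrow> nat) \<Rightarrow> real \<Rightarrow> real \<Rightarrow> (real \<times> real \<times> nat) option set \<Rightarrow> (real \<times> real \<times> nat) option set" where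
  "blk_dom_rho M r s S = S \<inter> blk_dom M s"

definition blk_cod_rho :: "(real \<Rightarrow> real \<Rightarrow> nat) \<Rightarrow> real \<Rightarrow> real \<Rightarrow> (real \<times> real \<times> nat) option set \<Rightarrow> (real \<times> real \<times> nat) option set" where
  "blk_cod_rho M r s S = S \<inter> blk_cod M s"

text \<open>The morphism: sum of the kappa^a \<rightarrow> kappa^b (identity where both are Z_2, else 0).\<close>
definition blk_mor :: "(real \<Rightarrow> real \<Rightarrow> nat) \<Rightarrow> real \<Rightarrow> (real \<times> real \<times> nat) option set \<Rightarrow> (real \<times> real \<times> nat) option set" where
  "blk_mor M r S = S \<inter> blk_cod M r"

end

theory Submission
  imports Defs
begin

section \<open>Z2 algebra\<close>

lemma zadd_mem: "x \<in> zadd A B \<longleftrightarrow> (x \<in> A) \<noteq> (x \<in> B)"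
  unfolding zadd_def by auto

lemma zadd_comm: "zadd A B = zadd B A"
  unfolding zadd_def by auto

lemma zadd_assoc: "zadd (zadd A B) C = zadd A (zadd B C)"
  unfolding zadd_def by auto

lemma zadd_empty[simp]: "zadd A {} = A" "zadd {} A = A"
  unfolding zadd_def by auto

lemma zadd_self[simp]: "zadd A A = {}"
  unfolding zadd_def by auto

lemma zadd_eq_empty: "zadd A B = {} \<longleftrightarrow> A = B"
  unfolding zadd_def by auto

lemma finite_zadd: "finite A \<Longrightarrow> finite B \<Longrightarrow> finite (zadd A B)"
  unfolding zadd_def by auto

lemma zadd_subset: "zadd A B \<subseteq> A \<union> B"
  unfolding zadd_def by auto

lemma card_symdiff:
  assumes "finite A" "finite B"
  shows "card A + card B = card (zadd A B) + 2 * card (A \<inter> B)"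
proof -
  have "card (zadd A B) = card (A - B) + card (B - A)"
    unfolding zadd_def using assms by (intro card_Un_disjoint) auto
  moreover have "card A = card (A - B) + card (A \<inter> B)"
  proof -
    have "A = (A - B) \<union> (A \<inter> B)" by auto
    then have "card A = card ((A - B) \<union> (A \<inter> B))" by simp
    also have "\<dots> = card (A - B) + card (A \<inter> B)" using assms by (intro card_Un_disjoint) auto
    finally show ?thesis .
  qed
  moreover have "card B = card (B - A) + card (A \<inter> B)"
  proof -
    have "B = (B - A) \<union> (A \<inter> B)" by auto
    then have "card B = card ((B - A) \<union> (A \<inter> B))" by simp
    also have "\<dots> = card (B - A) + card (A \<inter> B)" using assms by (intro card_Un_disjoint) auto
    finally show ?thesis .
  qed
  ultimately show ?thesis by simp
qed

lemma odd_zadd: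
  assumes "finite A" "finite B"
  shows "odd (card (zadd A B)) \<longleftrightarrow> (odd (card A) \<noteq> odd (card B))"
  using card_symdiff[OF assms] by (metis even_add even_mult_iff even_numeral)

lemma zadd_filter: "{S \<in> zadd F G. P S} = zadd {S\<in>F. P S} {S\<in>G. P S}"
  unfolding zadd_def by auto

lemma zsum_empty[simp]: "zsum {} = {}"
  unfolding zsum_def by simp

lemma zsum_single[simp]: "zsum {x} = x"
proof -
  have "\<And>y. {S \<in> {x}. y \<in> S} = (if y \<in> x then {x} else {})" by auto
  then show ?thesis unfolding zsum_def by (auto split: if_splits)
qed

lemma zsum_zadd:
  assumes "finite F" "finite G"
  shows "zadd (zsum F) (zsum G) = zsum (zadd F G)"
proof -
  have "y \<in> zadd (zsum F) (zsum G) \<longleftrightarrow> y \<in> zsum (zadd F G)" for y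
  proof -
    have "y \<in> zsum (zadd F G) \<longleftrightarrow> odd (card (zadd {S\<in>F. y \<in> S} {S\<in>G. y \<in> S}))"
      unfolding zsum_def by (simp add: zadd_filter)
    also have "\<dots> \<longleftrightarrow> (odd (card {S\<in>F. y \<in> S}) \<noteq> odd (card {S\<in>G. y \<in> S}))"
      using assms by (intro odd_zadd) auto
    finally show ?thesis unfolding zsum_def zadd_mem by simp
  qed
  then show ?thesis by auto
qed

lemma zsum_insert:
  assumes "finite F" "x \<notin> F"
  shows "zsum (insert x F) = zadd x (zsum F)"
proof -
  have "insert x F = zadd {x} F" using assms unfolding zadd_def by auto
  then show ?thesis using zsum_zadd[of "{x}" F] assms by simp
qed

lemma zsum_subset: "zsum F \<subseteq> \<Union>F"
proof
  fix y assume "y \<in> zsum F"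
  then have "card {S \<in> F. y \<in> S} \<noteq> 0" unfolding zsum_def by (metis (mono_tags) mem_Collect_eq odd_card_imp_not_empty card.empty)
  then obtain S where "S \<in> F" "y \<in> S" by (metis (mono_tags, lifting) card.empty empty_Collect_eq)
  then show "y \<in> \<Union>F" by auto
qed

lemma finite_zsum: "finite F \<Longrightarrow> \<forall>S\<in>F. finite S \<Longrightarrow> finite (zsum F)"
  by (meson finite_Union finite_subset zsum_subset)

lemma lin_ext_zadd:
  assumes "finite S" "finite T"
  shows "lin_ext g (zadd S T) = zadd (lin_ext g S) (lin_ext g T)"
proof -
  have "D \<in> lin_ext g (zadd S T) \<longleftrightarrow> D \<in> zadd (lin_ext g S) (lin_ext g T)" for D
  proof -
    have "D \<in> lin_ext g (zadd S T) \<longleftrightarrow> odd (card (zadd {C\<in>S. g C = D} {C\<in>T. g C = D}))"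
      unfolding lin_ext_def by (simp add: zadd_filter)
    also have "\<dots> \<longleftrightarrow> (odd (card {C\<in>S. g C = D}) \<noteq> odd (card {C\<in>T. g C = D}))"
      using assms by (intro odd_zadd) auto
    finally show ?thesis unfolding lin_ext_def zadd_mem by simp
  qed
  then show ?thesis by auto
qed

lemma lin_ext_empty[simp]: "lin_ext g {} = {}"
  unfolding lin_ext_def by simp

lemma lin_ext_single[simp]: "lin_ext g {x} = {g x}"
proof -
  have "\<And>D. {C \<in> {x}. g C = D} = (if g x = D then {x} else {})" by auto
  then show ?thesis unfolding lin_ext_def by (auto split: if_splits)
qed

lemma lin_ext_subset: "lin_ext g S \<subseteq> g ` S"
proof
  fix D assume "D \<in> lin_ext g S"
  then have "odd (card {C \<in> S. g C = D})" unfolding lin_ext_def by simp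
  then have "{C \<in> S. g C = D} \<noteq> {}" by (metis card.empty even_zero)
  then obtain C where "C \<in> S" "g C = D" by blast
  then show "D \<in> g ` S" by auto
qed

lemma finite_lin_ext: "finite S \<Longrightarrow> finite (lin_ext g S)"
  using lin_ext_subset[of g S] finite_subset by (metis finite_imageI)

lemma lin_ext_cong: "(\<And>x. x \<in> S \<Longrightarrow> g x = h x) \<Longrightarrow> lin_ext g S = lin_ext h S"
proof -
  assume "\<And>x. x \<in> S \<Longrightarrow> g x = h x"
  then have "\<And>D. {C\<in>S. g C = D} = {C\<in>S. h C = D}" by auto
  then show ?thesis unfolding lin_ext_def by simp
qed

lemma insert_zadd: "x \<notin> S \<Longrightarrow> insert x S = zadd {x} S"
  unfolding zadd_def by auto

lemma lin_ext_insert: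
  assumes "finite S" "x \<notin> S"
  shows "lin_ext g (insert x S) = zadd {g x} (lin_ext g S)"
  using lin_ext_zadd[of "{x}" S g] assms insert_zadd[of x S] by simp

lemma lin_ext_comp:
  assumes "finite S"
  shows "lin_ext g (lin_ext h S) = lin_ext (g \<circ> h) S"
  using assms
proof (induction S rule: finite_induct)
  case empty then show ?case by simp
next
  case (insert x F)
  have "lin_ext g (lin_ext h (insert x F)) = lin_ext g (zadd {h x} (lin_ext h F))"
    using insert by (simp add: lin_ext_insert)
  also have "\<dots> = zadd {g (h x)} (lin_ext g (lin_ext h F))"
    using insert by (simp add: lin_ext_zadd finite_lin_ext)
  also have "\<dots> = lin_ext (g \<circ> h) (insert x F)"
    using insert by (simp add: lin_ext_insert comp_def)
  finally show ?case .
qed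

lemma lin_ext_id:
  assumes "finite S" "\<And>C. C \<in> S \<Longrightarrow> g C = C"
  shows "lin_ext g S = S"
  using assms
proof (induction S rule: finite_induct)
  case empty then show ?case by simp
next
  case (insert x F)
  then have "lin_ext g (insert x F) = zadd {g x} (lin_ext g F)" by (simp add: lin_ext_insert)
  also have "\<dots> = zadd {x} F" using insert by simp
  finally show ?case using insert_zadd[of x F] insert by simp
qed

lemma lin_ext_zsum_zero:
  assumes "finite F" "\<forall>S\<in>F. finite S" "\<forall>S\<in>F. lin_ext g S = {}"
  shows "lin_ext g (zsum F) = {}"
  using assms
proof (induction F rule: finite_induct)
  case empty then show ?case by simp
next
  case (insert x F)
  then show ?case by (simp add: zsum_insert lin_ext_zadd finite_zsum)
qed

section \<open>Spans\<close>

lemma zspan_eq: "finite A \<Longrightarrow> zspan A = zsum ` Pow A"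
proof -
  assume A: "finite A"
  have "zspan A \<subseteq> zsum ` Pow A" unfolding zspan_def by blast
  moreover have "zsum ` Pow A \<subseteq> zspan A" unfolding zspan_def using A by (blast intro: finite_subset)
  ultimately show ?thesis by blast
qed

lemma zspan_mono: "A \<subseteq> A' \<Longrightarrow> zspan A \<subseteq> zspan A'"
  unfolding zspan_def by auto

lemma zspan_empty_in: "{} \<in> zspan A"
  unfolding zspan_def by (auto intro!: exI[of _ "{}"])

lemma zspan_base: "x \<in> A \<Longrightarrow> x \<in> zspan A"
  unfolding zspan_def by (auto intro!: exI[of _ "{x}"])

lemma zspan_of_empty[simp]: "zspan {} = {{}}"
  unfolding zspan_def by auto

lemma zspan_zadd:
  assumes "u \<in> zspan A" "v \<in> zspan A"
  shows "zadd u v \<in> zspan A"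
proof -
  obtain F G where "finite F" "F \<subseteq> A" "u = zsum F" "finite G" "G \<subseteq> A" "v = zsum G"
    using assms unfolding zspan_def by auto
  then have "zadd u v = zsum (zadd F G)" by (simp add: zsum_zadd)
  moreover have "finite (zadd F G)" using \<open>finite F\<close> \<open>finite G\<close> by (rule finite_zadd)
  moreover have "zadd F G \<subseteq> A" using zadd_subset[of F G] \<open>F \<subseteq> A\<close> \<open>G \<subseteq> A\<close> by blast
  ultimately show ?thesis unfolding zspan_def by blast
qed

lemma zspan_closed:
  assumes "finite F" "F \<subseteq> zspan A"
  shows "zsum F \<in> zspan A"
  using assms
proof (induction F rule: finite_induct)
  case empty then show ?case by (simp add: zspan_empty_in)
next
  case (insert x F)
  then show ?case by (simp add: zsum_insert zspan_zadd)
qed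

lemma zspan_subset_closed:
  assumes "A' \<subseteq> zspan A"
  shows "zspan A' \<subseteq> zspan A"
proof
  fix v assume "v \<in> zspan A'"
  then obtain F where "finite F" "F \<subseteq> A'" "v = zsum F" unfolding zspan_def by blast
  then show "v \<in> zspan A" using zspan_closed[of F A] assms by blast
qed

definition indep :: "'g set set \<Rightarrow> bool" where
  "indep A \<longleftrightarrow> finite A \<and> (\<forall>F\<subseteq>A. F \<noteq> {} \<longrightarrow> zsum F \<noteq> {})"

lemma indep_inj:
  assumes "indep A"
  shows "inj_on zsum (Pow A)"
proof (rule inj_onI)
  fix F G assume FG: "F \<in> Pow A" "G \<in> Pow A" "zsum F = zsum G"
  have fin: "finite F" "finite G" using FG assms unfolding indep_def by (auto dest: rev_finite_subset)
  have "zsum (zadd F G) = {}" using FG fin by (simp add: zsum_zadd[symmetric])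
  moreover have "zadd F G \<subseteq> A" using FG zadd_subset[of F G] by blast
  ultimately have "zadd F G = {}" using assms unfolding indep_def by blast
  then show "F = G" by (simp add: zadd_eq_empty)
qed

lemma indep_zsum_eq:
  assumes "indep A" "F \<subseteq> A" "G \<subseteq> A" "zsum F = zsum G"
  shows "F = G"
  using indep_inj[OF assms(1)] assms(2-4) unfolding inj_on_def by blast

lemma indep_subset: "indep A \<Longrightarrow> A' \<subseteq> A \<Longrightarrow> indep A'"
  unfolding indep_def by (meson rev_finite_subset subset_trans)

lemma card_zspan:
  assumes "indep A"
  shows "card (zspan A) = 2 ^ card A"
proof -
  have "finite A" using assms indep_def by auto
  then show ?thesis using indep_inj[OF assms] by (simp add: zspan_eq card_image card_Pow)
qed

lemma card_zspan_le:
  assumes "finite A"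
  shows "card (zspan A) \<le> 2 ^ card A"
proof -
  have "card (zsum ` Pow A) \<le> card (Pow A)" using assms by (intro card_image_le) simp
  then show ?thesis using assms by (simp add: zspan_eq card_Pow)
qed

lemma finite_zspan: "finite A \<Longrightarrow> finite (zspan A)"
  by (simp add: zspan_eq)

lemma zdim_indep:
  assumes "indep A"
  shows "zdim (zspan A) = card A"
  unfolding zdim_def
proof (rule Least_equality)
  have "finite A" using assms indep_def by auto
  then show "\<exists>B. finite B \<and> B \<subseteq> zspan A \<and> card B = card A \<and> zspan B = zspan A"
    by (auto intro: zspan_base)
next
  fix k assume "\<exists>B. finite B \<and> B \<subseteq> zspan A \<and> card B = k \<and> zspan B = zspan A"
  then obtain B where B: "finite B" "card B = k" "zspan B = zspan A" by auto
  have "(2::nat) ^ card A \<le> 2 ^ k"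
    using card_zspan[OF assms] card_zspan_le[OF B(1)] B by simp
  then show "card A \<le> k" by simp
qed

lemma zspan_inter:
  assumes "indep B" "P \<subseteq> B" "Q \<subseteq> B"
  shows "zspan P \<inter> zspan Q = zspan (P \<inter> Q)"
proof
  have fin: "finite P" "finite Q" using assms unfolding indep_def by (auto dest: rev_finite_subset)
  show "zspan P \<inter> zspan Q \<subseteq> zspan (P \<inter> Q)"
  proof
    fix v assume "v \<in> zspan P \<inter> zspan Q"
    then obtain F G where "F \<subseteq> P" "G \<subseteq> Q" "v = zsum F" "v = zsum G"
      using fin by (auto simp: zspan_eq)
    moreover then have "F \<subseteq> B" "G \<subseteq> B" using assms by auto
    moreover note indep_zsum_eq[OF assms(1), of F G]
    ultimately have "F = G" by simp
    moreover note \<open>F \<subseteq> P\<close> \<open>G \<subseteq> Q\<close> \<open>v = zsum F\<close>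
    ultimately have "F \<subseteq> P \<inter> Q" "v = zsum F" by auto
    moreover have "finite F" using fin \<open>F \<subseteq> P\<close> rev_finite_subset by blast
    ultimately show "v \<in> zspan (P \<inter> Q)" unfolding zspan_def by blast
  qed
  show "zspan (P \<inter> Q) \<subseteq> zspan P \<inter> zspan Q"
    by (simp add: zspan_mono)
qed

lemma subspace_sum_zspan:
  assumes "finite P" "finite Q"
  shows "subspace_sum (zspan P) (zspan Q) = zspan (P \<union> Q)"
proof
  show "subspace_sum (zspan P) (zspan Q) \<subseteq> zspan (P \<union> Q)"
    unfolding subspace_sum_def
    using zspan_zadd zspan_mono[of P "P \<union> Q"] zspan_mono[of Q "P \<union> Q"] by blast
  show "zspan (P \<union> Q) \<subseteq> subspace_sum (zspan P) (zspan Q)"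
  proof
    fix v assume "v \<in> zspan (P \<union> Q)"
    then obtain H where H: "H \<subseteq> P \<union> Q" "v = zsum H" using assms by (auto simp: zspan_eq)
    have fH: "finite H" using H assms rev_finite_subset by (metis finite_Un)
    have "zadd (zsum (H \<inter> P)) (zsum (H - P)) = zsum (zadd (H \<inter> P) (H - P))"
      using fH by (intro zsum_zadd) auto
    also have "zadd (H \<inter> P) (H - P) = H" unfolding zadd_def by auto
    finally have "v = zadd (zsum (H \<inter> P)) (zsum (H - P))" using H by simp
    moreover have "zsum (H \<inter> P) \<in> zspan P" "zsum (H - P) \<in> zspan Q"
      using H fH unfolding zspan_def by auto
    ultimately show "v \<in> subspace_sum (zspan P) (zspan Q)"
      unfolding subspace_sum_def by blast
  qed
qed

lemma quot_dim_zspan: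
  assumes "indep B" "P \<subseteq> B" "Q \<subseteq> P"
  shows "quot_dim (zspan P) (zspan Q) = card (P - Q)"
proof -
  have "indep P" "indep Q" using assms indep_subset by blast+
  moreover have "finite P" using \<open>indep P\<close> indep_def by auto
  moreover have "finite Q" using \<open>indep Q\<close> indep_def by auto
  ultimately show ?thesis unfolding quot_dim_def using assms
    by (simp add: zdim_indep card_Diff_subset)
qed



section \<open>Components and projections\<close>

definition pi :: "(nat \<Rightarrow> nat \<Rightarrow> real) \<Rightarrow> nat \<Rightarrow> real \<Rightarrow> nat set \<Rightarrow> nat set set" where
  "pi d n r v = lin_ext (vrcomp d n r) v"

definition sel :: "nat set \<Rightarrow> nat" where "sel C = (SOME i. i \<in> C)"

definition lift :: "nat set set \<Rightarrow> nat set" where "lift S = lin_ext sel S"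

definition pairs :: "(nat \<Rightarrow> nat \<Rightarrow> real) \<Rightarrow> nat \<Rightarrow> real \<Rightarrow> nat set set" where
  "pairs d n r = {{i, j} | i j. i < n \<and> j < n \<and> i \<noteq> j \<and> gconn d n r i j}"

lemma ker_plus_pairs: "ker_plus d n r = zspan (pairs d n r)"
  unfolding ker_plus_def pairs_def ..

lemma vrcomp_refl: "i \<in> vrcomp d n r i"
  unfolding vrcomp_def by simp

lemma vredges_sub: "vredges d n r \<union> (vredges d n r)\<inverse> \<subseteq> {..<n} \<times> {..<n}"
  unfolding vredges_def gedges_def by auto

lemma vrcomp_sub:
  assumes "i < n"
  shows "vrcomp d n r i \<subseteq> {..<n}"
proof
  fix j assume "j \<in> vrcomp d n r i"
  then have "(i, j) \<in> (vredges d n r \<union> (vredges d n r)\<inverse>)\<^sup>*" unfolding vrcomp_def by simp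
  then show "j \<in> {..<n}"
  proof (induction rule: rtrancl_induct)
    case base then show ?case using assms by simp
  next
    case (step y z) then show ?case using vredges_sub by blast
  qed
qed

lemma sym_rt: "(i, j) \<in> (R \<union> R\<inverse>)\<^sup>* \<Longrightarrow> (j, i) \<in> (R \<union> R\<inverse>)\<^sup>*"
proof -
  assume "(i, j) \<in> (R \<union> R\<inverse>)\<^sup>*"
  then have "(j, i) \<in> ((R \<union> R\<inverse>)\<inverse>)\<^sup>*" by (simp add: rtrancl_converse)
  moreover have "(R \<union> R\<inverse>)\<inverse> = R \<union> R\<inverse>" by auto
  ultimately show ?thesis by simp
qed

lemma vrcomp_eq:
  assumes "j \<in> vrcomp d n r i"
  shows "vrcomp d n r j = vrcomp d n r i"
proof -
  let ?R = "vredges d n r \<union> (vredges d n r)\<inverse>"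
  have ij: "(i, j) \<in> ?R\<^sup>*" using assms unfolding vrcomp_def by simp
  then have ji: "(j, i) \<in> ?R\<^sup>*" by (rule sym_rt)
  show ?thesis unfolding vrcomp_def using ij ji by (auto intro: rtrancl_trans)
qed

lemma vrcomp_mono:
  assumes "vredges d n r \<subseteq> vredges d' n s"
  shows "vrcomp d n r i \<subseteq> vrcomp d' n s i"
proof -
  have "vredges d n r \<union> (vredges d n r)\<inverse> \<subseteq> vredges d' n s \<union> (vredges d' n s)\<inverse>"
    using assms by auto
  then show ?thesis unfolding vrcomp_def using rtrancl_mono by blast
qed

lemma vrcomp_gconn:
  assumes "r > 0"
  shows "j \<in> vrcomp d n r i \<longleftrightarrow> gconn d n r i j"
  using assms unfolding vrcomp_def gconn_def vredges_def by simp

lemma vrcomp_zero: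
  assumes "\<not> r > 0"
  shows "vrcomp d n r i = {i}"
  using assms unfolding vrcomp_def vredges_def by simp

lemma pi_zadd: "finite u \<Longrightarrow> finite v \<Longrightarrow> pi d n r (zadd u v) = zadd (pi d n r u) (pi d n r v)"
  unfolding pi_def by (rule lin_ext_zadd)

lemma lin_ext_single_inj:
  assumes "finite v" "lin_ext (\<lambda>i. {i}) v = {}"
  shows "v = {}"
proof (rule ccontr)
  assume "v \<noteq> {}"
  then obtain x where "x \<in> v" by auto
  have "{C \<in> v. {C} = {x}} = {x}" using \<open>x \<in> v\<close> by auto
  then have "{x} \<in> lin_ext (\<lambda>i. {i}) v" unfolding lin_ext_def by simp
  then show False using assms by simp
qed

lemma pi_zero_iff:
  assumes "finite v" "v \<subseteq> {..<n}"
  shows "pi d n r v = {} \<longleftrightarrow> v = {} \<or> (r > 0 \<and> v \<in> ker_plus d n r)"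
proof (cases "r > 0")
  case False
  then have "pi d n r v = lin_ext (\<lambda>i. {i}) v" unfolding pi_def by (rule_tac lin_ext_cong) (simp add: vrcomp_zero[OF False])
  then show ?thesis using lin_ext_single_inj[OF assms(1)] False by auto
next
  case True
  have pz: "pi d n r p = {}" if pp: "p \<in> pairs d n r" for p
  proof -
    obtain i j where p: "p = {i,j}" "i \<noteq> j" "gconn d n r i j" using pp unfolding pairs_def by auto
    have "vrcomp d n r j = vrcomp d n r i" using p vrcomp_gconn[OF True] vrcomp_eq by blast
    then show ?thesis unfolding pi_def using p lin_ext_insert[of "{j}" i "vrcomp d n r"] by simp
  qed
  have fin_pairs: "\<forall>S\<in>pairs d n r. finite S" unfolding pairs_def by auto
  have "pi d n r v = {} \<longleftrightarrow> v \<in> ker_plus d n r"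
  proof
    assume "v \<in> ker_plus d n r"
    then obtain F where F: "finite F" "F \<subseteq> pairs d n r" "v = zsum F"
      unfolding ker_plus_pairs zspan_def by auto
    then show "pi d n r v = {}" unfolding pi_def
      using lin_ext_zsum_zero[of F "vrcomp d n r"] pz fin_pairs unfolding pi_def by blast
  next
    assume "pi d n r v = {}"
    with assms show "v \<in> ker_plus d n r"
    proof (induction "card v" arbitrary: v rule: less_induct)
      case less
      show ?case
      proof (cases "v = {}")
        case True then show ?thesis by (simp add: ker_plus_pairs zspan_empty_in)
      next
        case False
        then obtain x where x: "x \<in> v" by auto
        let ?D = "vrcomp d n r x"
        have "odd (card {C \<in> v. vrcomp d n r C = ?D}) = False"
          using less.prems(3) unfolding pi_def lin_ext_def by blast
        moreover have "{C \<in> v. vrcomp d n r C = ?D} \<noteq> {x}"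
        proof
          assume "{C \<in> v. vrcomp d n r C = ?D} = {x}"
          then show False using calculation by simp
        qed
        moreover have "x \<in> {C \<in> v. vrcomp d n r C = ?D}" using x by simp
        ultimately obtain y where y: "y \<in> v" "y \<noteq> x" "vrcomp d n r y = ?D" by blast
        have "y \<in> ?D" using y vrcomp_refl by metis
        then have gc: "gconn d n r x y" using vrcomp_gconn[OF True] by simp
        have xy: "x < n" "y < n" using x y less.prems by auto
        have pxy: "{x, y} \<in> pairs d n r" unfolding pairs_def using gc xy y by blast
        let ?w = "v - {x, y}"
        have vw: "v = zadd {x, y} ?w" unfolding zadd_def using x y by auto
        have cw: "card ?w < card v" using x y less.prems(1) by (intro psubset_card_mono) auto
        have "pi d n r {x, y} = {}" using pz pxy by simp
        then have "pi d n r ?w = {}"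
          using less.prems(3) vw pi_zadd[of "{x,y}" ?w d n r] less.prems(1) by simp
        then have "?w \<in> ker_plus d n r" using less.hyps[OF cw] less.prems by auto
        moreover have "{x, y} \<in> ker_plus d n r" unfolding ker_plus_pairs using pxy by (rule zspan_base)
        ultimately show ?thesis using vw unfolding ker_plus_pairs by (metis zspan_zadd)
      qed
    qed
  qed
  moreover have "{} \<in> ker_plus d n r" by (simp add: ker_plus_pairs zspan_empty_in)
  ultimately show ?thesis using True by auto
qed

lemma sel_in: "C \<noteq> {} \<Longrightarrow> sel C \<in> C"
  unfolding sel_def by (auto intro: someI)

lemma H0gen_elem: "C \<in> H0gen d n r \<Longrightarrow> \<exists>i<n. C = vrcomp d n r i"
  unfolding H0gen_def by auto

lemma pi_vsp:
  assumes "finite v" "v \<subseteq> {..<n}"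
  shows "pi d n r v \<in> vsp (H0gen d n r)"
proof -
  have "lin_ext (vrcomp d n r) v \<subseteq> vrcomp d n r ` {..<n}"
    using assms lin_ext_subset[of "vrcomp d n r" v] by blast
  then show ?thesis unfolding vsp_def pi_def H0gen_def using assms by (auto intro: finite_lin_ext)
qed

lemma lift_vsp:
  assumes "S \<in> vsp (H0gen d n r)"
  shows "finite (lift S)" "lift S \<subseteq> {..<n}"
proof -
  have "finite S" using assms vsp_def by auto
  then show "finite (lift S)" unfolding lift_def by (rule finite_lin_ext)
  have "sel C < n" if CS: "C \<in> S" for C
  proof -
    obtain i where i: "i < n" "C = vrcomp d n r i" using CS assms H0gen_elem[of C d n r] unfolding vsp_def by blast
    then have "C \<noteq> {}" using vrcomp_refl[of i d n r] by auto
    then have "sel C \<in> C" by (rule sel_in)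
    then show ?thesis using i vrcomp_sub by blast
  qed
  then show "lift S \<subseteq> {..<n}" unfolding lift_def using lin_ext_subset[of sel S] by auto
qed

lemma pi_lift:
  assumes "S \<in> vsp (H0gen d n r)"
  shows "pi d n r (lift S) = S"
proof -
  have fS: "finite S" using assms vsp_def by auto
  have "pi d n r (lift S) = lin_ext (vrcomp d n r \<circ> sel) S"
    unfolding pi_def lift_def using fS by (rule lin_ext_comp)
  also have "\<dots> = S"
  proof (rule lin_ext_id[OF fS])
    fix C assume "C \<in> S"
    then obtain i where i: "i < n" "C = vrcomp d n r i" using assms H0gen_elem[of C d n r] unfolding vsp_def by blast
    then have "C \<noteq> {}" using vrcomp_refl[of i d n r] by auto
    then have "sel C \<in> C" by (rule sel_in)
    then show "(vrcomp d n r \<circ> sel) C = C" using i vrcomp_eq by simp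
  qed
  finally show ?thesis .
qed

lemma lift_zadd:
  assumes "finite S" "finite T"
  shows "lift (zadd S T) = zadd (lift S) (lift T)"
  unfolding lift_def using assms by (rule lin_ext_zadd)

lemma H0map_pi:
  assumes "finite v" "v \<subseteq> {..<n}" "\<forall>i<n. vrcomp d' n r i \<subseteq> vrcomp d n s i"
  shows "H0map d n s (pi d' n r v) = pi d n s v"
proof -
  have "H0map d n s (pi d' n r v) = lin_ext ((\<lambda>C. vrcomp d n s (SOME i. i \<in> C)) \<circ> vrcomp d' n r) v"
    unfolding H0map_def pi_def using assms(1) by (rule lin_ext_comp)
  also have "\<dots> = pi d n s v"
    unfolding pi_def
  proof (rule lin_ext_cong)
    fix i assume "i \<in> v"
    then have "i < n" using assms by auto
    have "(SOME j. j \<in> vrcomp d' n r i) \<in> vrcomp d' n r i" using vrcomp_refl by (rule someI)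
    then have "(SOME j. j \<in> vrcomp d' n r i) \<in> vrcomp d n s i" using assms(3) \<open>i < n\<close> by blast
    then show "((\<lambda>C. vrcomp d n s (SOME i. i \<in> C)) \<circ> vrcomp d' n r) i = vrcomp d n s i"
      using vrcomp_eq by simp
  qed
  finally show ?thesis .
qed

lemma zlinear_H0map:
  assumes "\<forall>i<n. vrcomp d' n r i \<subseteq> vrcomp d n s i"
  shows "zlinear (H0gen d' n r) (H0gen d n s) (H0map d n s)"
  unfolding zlinear_def
proof (intro conjI ballI)
  fix S assume S: "S \<in> vsp (H0gen d' n r)"
  have "H0map d n s S = H0map d n s (pi d' n r (lift S))" using pi_lift[OF S] by simp
  also have "\<dots> = pi d n s (lift S)" using H0map_pi lift_vsp[OF S] assms by blast
  finally show "H0map d n s S \<in> vsp (H0gen d n s)" using pi_vsp lift_vsp[OF S] by simp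
next
  fix S T assume S: "S \<in> vsp (H0gen d' n r)" and T: "T \<in> vsp (H0gen d' n r)"
  then show "H0map d n s (zadd S T) = zadd (H0map d n s S) (H0map d n s T)"
    unfolding H0map_def by (intro lin_ext_zadd) (auto simp: vsp_def)
qed



section \<open>Even vectors, levels and valuations\<close>

definition allpairs :: "nat \<Rightarrow> nat set set" where
  "allpairs n = {{i, j} | i j. i < n \<and> j < n \<and> i \<noteq> j}"

definition EE :: "nat \<Rightarrow> nat set set" where
  "EE n = zspan (allpairs n)"

definition LL :: "(nat \<Rightarrow> nat \<Rightarrow> real) \<Rightarrow> nat \<Rightarrow> real set" where
  "LL d n = insert 0 ((\<lambda>(i, j). d i j) ` ({..<n} \<times> {..<n}))"

definition dval :: "(nat \<Rightarrow> nat \<Rightarrow> real) \<Rightarrow> nat \<Rightarrow> nat set \<Rightarrow> real" where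
  "dval d n v = Min {a \<in> LL d n. v \<in> ker_plus d n a}"

lemma allpairs_sub: "allpairs n \<subseteq> Pow {..<n}"
  unfolding allpairs_def by auto

lemma finite_allpairs: "finite (allpairs n)"
  using allpairs_sub finite_subset by (metis finite_Pow_iff finite_lessThan)

lemma EE_sub: "v \<in> EE n \<Longrightarrow> v \<subseteq> {..<n}"
proof -
  assume "v \<in> EE n"
  then obtain F where "F \<subseteq> allpairs n" "v = zsum F" unfolding EE_def zspan_def by auto
  then show ?thesis using zsum_subset[of F] allpairs_sub by blast
qed

lemma EE_finite_elem: "v \<in> EE n \<Longrightarrow> finite v"
  using EE_sub finite_subset by blast

lemma finite_EE: "finite (EE n)"
  unfolding EE_def using finite_allpairs by (rule finite_zspan)

lemma EE_zadd: "u \<in> EE n \<Longrightarrow> v \<in> EE n \<Longrightarrow> zadd u v \<in> EE n"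
  unfolding EE_def by (rule zspan_zadd)

lemma EE_zsum: "finite F \<Longrightarrow> F \<subseteq> EE n \<Longrightarrow> zsum F \<in> EE n"
  unfolding EE_def by (rule zspan_closed)

lemma EE_empty: "{} \<in> EE n"
  unfolding EE_def by (rule zspan_empty_in)

lemma pairs_sub: "pairs d n r \<subseteq> allpairs n"
  unfolding pairs_def allpairs_def by blast

lemma ker_plus_EE: "ker_plus d n r \<subseteq> EE n"
  unfolding ker_plus_pairs EE_def using pairs_sub by (rule zspan_mono)

lemma gedges_mono: "r \<le> s \<Longrightarrow> gedges d n r \<subseteq> gedges d n s"
  unfolding gedges_def by auto

lemma gconn_mono: "r \<le> s \<Longrightarrow> gconn d n r i j \<Longrightarrow> gconn d n s i j"
proof -
  assume "r \<le> s" "gconn d n r i j"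
  moreover have "gedges d n r \<union> (gedges d n r)\<inverse> \<subseteq> gedges d n s \<union> (gedges d n s)\<inverse>"
    using gedges_mono[OF \<open>r \<le> s\<close>] by auto
  ultimately show ?thesis unfolding gconn_def using rtrancl_mono by blast
qed

lemma pairs_mono: "r \<le> s \<Longrightarrow> pairs d n r \<subseteq> pairs d n s"
  unfolding pairs_def using gconn_mono by blast

lemma ker_plus_mono: "r \<le> s \<Longrightarrow> ker_plus d n r \<subseteq> ker_plus d n s"
  unfolding ker_plus_pairs using pairs_mono by (metis zspan_mono)

lemma finite_LL: "finite (LL d n)"
  unfolding LL_def by simp

lemma LL_red:
  assumes "0 \<le> a"
  obtains a' where "a' \<in> LL d n" "a' \<le> a" "ker_plus d n a' = ker_plus d n a"
proof -
  let ?S = "{x \<in> LL d n. x \<le> a}"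
  have fin: "finite ?S" using finite_LL by simp
  have ne: "0 \<in> ?S" using assms unfolding LL_def by simp
  let ?a' = "Max ?S"
  have a'S: "?a' \<in> ?S" using fin ne by (intro Max_in) auto
  have "gedges d n ?a' = gedges d n a"
  proof
    show "gedges d n ?a' \<subseteq> gedges d n a" using a'S gedges_mono by blast
    show "gedges d n a \<subseteq> gedges d n ?a'"
    proof
      fix e assume "e \<in> gedges d n a"
      then obtain i j where e: "e = (i, j)" "i < n" "j < n" "i \<noteq> j" "d i j \<le> a" unfolding gedges_def by auto
      then have "d i j \<in> ?S" unfolding LL_def by auto
      then have "d i j \<le> ?a'" using fin by (intro Max_ge) auto
      then show "e \<in> gedges d n ?a'" using e unfolding gedges_def by auto
    qed
  qed
  then have "ker_plus d n ?a' = ker_plus d n a"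
    unfolding ker_plus_def gconn_def by simp
  then show ?thesis using that a'S by blast
qed

lemma ker_plus_top:
  assumes "v \<in> EE n"
  shows "v \<in> ker_plus d n (Max (LL d n))"
proof -
  have "allpairs n \<subseteq> pairs d n (Max (LL d n))"
  proof
    fix p assume "p \<in> allpairs n"
    then obtain i j where p: "p = {i, j}" "i < n" "j < n" "i \<noteq> j" unfolding allpairs_def by auto
    then have "d i j \<in> LL d n" unfolding LL_def by auto
    then have "d i j \<le> Max (LL d n)" using finite_LL[of d n] by (intro Max_ge)
    then have "(i, j) \<in> gedges d n (Max (LL d n))" using p unfolding gedges_def by auto
    then have "gconn d n (Max (LL d n)) i j" unfolding gconn_def by auto
    then show "p \<in> pairs d n (Max (LL d n))" using p unfolding pairs_def by blast
  qed
  then show ?thesis using assms unfolding EE_def ker_plus_pairs using zspan_mono by blast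
qed

lemma dval_in:
  assumes "v \<in> EE n"
  shows "dval d n v \<in> LL d n" "v \<in> ker_plus d n (dval d n v)"
proof -
  let ?S = "{a \<in> LL d n. v \<in> ker_plus d n a}"
  have "Max (LL d n) \<in> LL d n" using finite_LL by (intro Max_in) (auto simp: LL_def)
  then have ne: "?S \<noteq> {}" using ker_plus_top[OF assms] by blast
  have "Min ?S \<in> ?S" using finite_LL ne by (intro Min_in) auto
  then show "dval d n v \<in> LL d n" "v \<in> ker_plus d n (dval d n v)" unfolding dval_def by auto
qed

lemma dval_le_iff:
  assumes "v \<in> EE n" "0 \<le> a"
  shows "v \<in> ker_plus d n a \<longleftrightarrow> dval d n v \<le> a"
proof
  assume "v \<in> ker_plus d n a"
  obtain a' where a': "a' \<in> LL d n" "a' \<le> a" "ker_plus d n a' = ker_plus d n a"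
    using LL_red[OF assms(2)] by blast
  then have "a' \<in> {a \<in> LL d n. v \<in> ker_plus d n a}" using \<open>v \<in> ker_plus d n a\<close> by simp
  then have "dval d n v \<le> a'" unfolding dval_def using finite_LL by (intro Min_le) auto
  then show "dval d n v \<le> a" using a' by simp
next
  assume "dval d n v \<le> a"
  then show "v \<in> ker_plus d n a" using dval_in(2)[OF assms(1)] ker_plus_mono by blast
qed

context
  fixes d :: "nat \<Rightarrow> nat \<Rightarrow> real" and n :: nat
  assumes nonneg: "\<forall>i<n. \<forall>j<n. d i j \<ge> 0"
begin

lemma LL_nonneg: "a \<in> LL d n \<Longrightarrow> 0 \<le> a"
  unfolding LL_def using nonneg by auto

lemma dval_nonneg: "v \<in> EE n \<Longrightarrow> 0 \<le> dval d n v"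
  using dval_in(1) LL_nonneg by blast

lemma dval_empty: "dval d n {} = 0"
proof -
  have "{} \<in> ker_plus d n 0" by (simp add: ker_plus_pairs zspan_empty_in)
  then have "dval d n {} \<le> 0" using dval_le_iff[OF EE_empty] by simp
  then show ?thesis using dval_nonneg[OF EE_empty] by simp
qed

lemma dval_zsum_le:
  assumes "finite F" "F \<subseteq> EE n" "0 \<le> c" "\<forall>w\<in>F. dval d n w \<le> c"
  shows "dval d n (zsum F) \<le> c"
proof -
  have "F \<subseteq> ker_plus d n c" using assms dval_le_iff by blast
  then have "zsum F \<in> ker_plus d n c" unfolding ker_plus_pairs using assms(1) by (rule zspan_closed[rotated])
  moreover have "zsum F \<in> EE n" using assms EE_zsum by blast
  ultimately show ?thesis using dval_le_iff assms(3) by blast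
qed

lemma dval_zadd_le:
  assumes "u \<in> EE n" "v \<in> EE n" "0 \<le> c" "dval d n u \<le> c" "dval d n v \<le> c"
  shows "dval d n (zadd u v) \<le> c"
proof -
  have "u \<in> ker_plus d n c" "v \<in> ker_plus d n c" using assms dval_le_iff by blast+
  then have "zadd u v \<in> ker_plus d n c" unfolding ker_plus_pairs by (rule zspan_zadd)
  then show ?thesis using dval_le_iff assms EE_zadd by blast
qed

lemma ker_plus_char:
  assumes "0 \<le> a"
  shows "ker_plus d n a = {v \<in> EE n. dval d n v \<le> a}"
  using dval_le_iff[OF _ assms] ker_plus_EE by blast

lemma ker_minus_char:
  assumes "0 \<le> b"
  shows "ker_minus d n b = {v \<in> EE n. v = {} \<or> dval d n v < b}"
proof (cases "b = 0")
  case True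
  then show ?thesis unfolding ker_minus_def using dval_nonneg EE_empty by force
next
  case False
  then have bpos: "b > 0" using assms by simp
  let ?G = "{{i, j} | i j r. i < n \<and> j < n \<and> i \<noteq> j \<and> 0 \<le> r \<and> r < b \<and> gconn d n r i j}"
  have km: "ker_minus d n b = zspan ?G" unfolding ker_minus_def using False by simp
  have Gsub: "?G \<subseteq> allpairs n" unfolding allpairs_def by blast
  have finG: "finite ?G" using Gsub finite_allpairs finite_subset by blast
  have GE: "?G \<subseteq> EE n" using Gsub unfolding EE_def using zspan_base by blast
  have Gval: "dval d n g < b" if gG: "g \<in> ?G" for g
  proof -
    obtain i j r where g: "g = {i,j}" "i < n" "j < n" "i \<noteq> j" "0 \<le> r" "r < b" "gconn d n r i j"
      using gG by blast
    then have "g \<in> pairs d n r" unfolding pairs_def by blast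
    then have "g \<in> ker_plus d n r" unfolding ker_plus_pairs by (rule zspan_base)
    then have "dval d n g \<le> r" using dval_le_iff g GE gG by blast
    then show ?thesis using g by simp
  qed
  show ?thesis
  proof
    show "ker_minus d n b \<subseteq> {v \<in> EE n. v = {} \<or> dval d n v < b}"
    proof
      fix v assume "v \<in> ker_minus d n b"
      then obtain F where F: "finite F" "F \<subseteq> ?G" "v = zsum F" unfolding km zspan_def by blast
      let ?c = "Max (insert 0 (dval d n ` F))"
      have fc: "finite (insert 0 (dval d n ` F))" using F by simp
      have c0: "0 \<le> ?c" using fc by (intro Max_ge) auto
      have cb: "?c < b"
      proof -
        have "\<forall>x \<in> insert 0 (dval d n ` F). x < b"
        proof
          fix x assume "x \<in> insert 0 (dval d n ` F)"
          then consider "x = 0" | w where "w \<in> F" "x = dval d n w" by blast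
          then show "x < b"
          proof cases
            case 1 then show ?thesis using bpos by simp
          next
            case 2
            then have "w \<in> ?G" using F(2) by blast
            then show ?thesis using Gval 2 by blast
          qed
        qed
        then show ?thesis using fc Max_in by blast
      qed
      have FE: "F \<subseteq> EE n" using F(2) GE by (rule subset_trans)
      have "\<forall>w\<in>F. dval d n w \<le> ?c" using fc by (auto intro: Max_ge)
      then have "dval d n v \<le> ?c" using dval_zsum_le[OF F(1) FE c0] F(3) by simp
      moreover have "v \<in> EE n" using EE_zsum[OF F(1) FE] F(3) by simp
      ultimately show "v \<in> {v \<in> EE n. v = {} \<or> dval d n v < b}" using cb by simp
    qed
    show "{v \<in> EE n. v = {} \<or> dval d n v < b} \<subseteq> ker_minus d n b"
    proof
      fix v assume v: "v \<in> {v \<in> EE n. v = {} \<or> dval d n v < b}"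
      show "v \<in> ker_minus d n b"
      proof (cases "v = {}")
        case True then show ?thesis unfolding km by (simp add: zspan_empty_in)
      next
        case False
        then have vE: "v \<in> EE n" and vb: "dval d n v < b" using v by auto
        have "v \<in> zspan (pairs d n (dval d n v))" using dval_in(2)[OF vE] ker_plus_pairs by metis
        moreover have "pairs d n (dval d n v) \<subseteq> ?G"
          unfolding pairs_def using vb dval_nonneg[OF vE] by blast
        ultimately show ?thesis unfolding km using zspan_mono by blast
      qed
    qed
  qed
qed

end



lemma even_EE: "v \<in> EE n \<Longrightarrow> even (card v)"
proof -
  assume "v \<in> EE n"
  then obtain F where F: "finite F" "F \<subseteq> allpairs n" "v = zsum F" unfolding EE_def zspan_def by auto
  have "finite (zsum F) \<and> even (card (zsum F))" using F(1,2)
  proof (induction F rule: finite_induct)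
    case empty then show ?case by simp
  next
    case (insert x F)
    then obtain i j where x: "x = {i, j}" "i \<noteq> j" unfolding allpairs_def by auto
    then have "finite x" "even (card x)" by auto
    have fz: "finite (zsum F)" "even (card (zsum F))" using insert by auto
    have "zsum (insert x F) = zadd x (zsum F)" using insert by (simp add: zsum_insert)
    moreover have "finite (zadd x (zsum F))" using \<open>finite x\<close> fz by (simp add: finite_zadd)
    moreover have "even (card (zadd x (zsum F)))" using odd_zadd[OF \<open>finite x\<close> fz(1)] \<open>even (card x)\<close> fz(2) by simp
    ultimately show ?case by simp
  qed
  then show ?thesis using F by simp
qed

lemma single0_notin_EE: "{0} \<notin> EE n"
  using even_EE by fastforce

lemma zadd_cancel_left: "zadd (zadd a b) (zadd a c) = zadd b c"
  unfolding zadd_def by auto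

lemma split_EE:
  assumes "0 < n" "finite v" "v \<subseteq> {..<n}"
  shows "v \<in> EE n \<or> zadd {0} v \<in> EE n"
  using assms(2,3)
proof (induction v rule: finite_induct)
  case empty then show ?case using EE_empty by simp
next
  case (insert x F)
  have x0: "zadd {0} {x} \<in> EE n"
  proof (cases "x = 0")
    case True then show ?thesis using EE_empty by simp
  next
    case False
    then have "{0, x} \<in> allpairs n" unfolding allpairs_def using assms(1) insert.prems by blast
    moreover have "zadd {0} {x} = {0, x}" unfolding zadd_def using False by auto
    ultimately show ?thesis unfolding EE_def by (simp add: zspan_base)
  qed
  have ix: "insert x F = zadd {x} F" using insert.hyps(2) by (rule insert_zadd)
  have "F \<in> EE n \<or> zadd {0} F \<in> EE n" using insert by simp
  then show ?case
  proof
    assume "F \<in> EE n"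
    then have "zadd (zadd {0} {x}) F \<in> EE n" using x0 EE_zadd by blast
    then show ?thesis using ix by (simp add: zadd_assoc)
  next
    assume "zadd {0} F \<in> EE n"
    then have "zadd (zadd {0} {x}) (zadd {0} F) \<in> EE n" using x0 EE_zadd by blast
    then show ?thesis using ix zadd_cancel_left by metis
  qed
qed

definition P0 :: "nat \<Rightarrow> nat set set" where
  "P0 n = {{0, j} | j. 0 < j \<and> j < n}"

lemma P0_indep: "indep (P0 n)"
  unfolding indep_def
proof (intro conjI allI impI)
  show "finite (P0 n)" unfolding P0_def by simp
next
  fix F assume F: "F \<subseteq> P0 n" "F \<noteq> {}"
  then obtain j where j: "{0, j} \<in> F" "0 < j" unfolding P0_def by auto
  have "{S \<in> F. j \<in> S} = {{0, j}}"
  proof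
    show "{S \<in> F. j \<in> S} \<subseteq> {{0, j}}"
    proof
      fix S assume "S \<in> {S \<in> F. j \<in> S}"
      then obtain j' where "S = {0, j'}" "j \<in> S" "0 < j'" using F unfolding P0_def by auto
      then show "S \<in> {{0, j}}" using j by auto
    qed
    show "{{0, j}} \<subseteq> {S \<in> F. j \<in> S}" using j by auto
  qed
  then have "j \<in> zsum F" unfolding zsum_def by simp
  then show "zsum F \<noteq> {}" by auto
qed

lemma P0_span:
  assumes "0 < n"
  shows "zspan (P0 n) = EE n"
proof
  have "P0 n \<subseteq> allpairs n" unfolding P0_def allpairs_def using assms by fastforce
  then show "zspan (P0 n) \<subseteq> EE n" unfolding EE_def by (rule zspan_mono)
  have "allpairs n \<subseteq> zspan (P0 n)"
  proof
    fix p assume "p \<in> allpairs n"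
    then obtain i j where p: "p = {i, j}" "i < n" "j < n" "i \<noteq> j" unfolding allpairs_def by auto
    show "p \<in> zspan (P0 n)"
    proof (cases "i = 0 \<or> j = 0")
      case True
      then have "p \<in> P0 n"
      proof
        assume "i = 0" then show ?thesis unfolding P0_def using p by auto
      next
        assume "j = 0" then have "p = {0, i}" "0 < i" using p by auto
        then show ?thesis unfolding P0_def using p by auto
      qed
      then show ?thesis by (rule zspan_base)
    next
      case False
      have "{0, i} \<in> P0 n" "{0, j} \<in> P0 n" unfolding P0_def using p False by auto
      then have "zadd {0, i} {0, j} \<in> zspan (P0 n)" by (intro zspan_zadd zspan_base)
      moreover have "zadd {0, i} {0, j} = p" unfolding zadd_def using p False by auto
      ultimately show ?thesis by simp
    qed
  qed
  then show "EE n \<subseteq> zspan (P0 n)" unfolding EE_def by (rule zspan_subset_closed)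
qed

section \<open>Bases and exchange\<close>

definition bases :: "nat \<Rightarrow> nat set set set" where
  "bases n = {B. B \<subseteq> EE n \<and> indep B \<and> zspan B = EE n}"

lemma finite_bases: "finite (bases n)"
proof -
  have "bases n \<subseteq> Pow (EE n)" unfolding bases_def by auto
  then show ?thesis using finite_EE by (meson finite_Pow_iff finite_subset)
qed

lemma bases_ne: "0 < n \<Longrightarrow> P0 n \<in> bases n"
  unfolding bases_def using P0_indep P0_span zspan_base by blast

lemma exchange:
  assumes B: "B \<in> bases n" and G: "G \<subseteq> B" "k \<in> G"
  shows "zsum G \<notin> B - {k}" "insert (zsum G) (B - {k}) \<in> bases n"
proof -
  have iB: "indep B" and BE: "B \<subseteq> EE n" and sB: "zspan B = EE n" using B unfolding bases_def by auto
  have fB: "finite B" using iB indep_def by auto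
  have fG: "finite G" using fB G finite_subset by blast
  let ?w = "zsum G"
  show wn: "?w \<notin> B - {k}"
  proof
    assume "?w \<in> B - {k}"
    then have "zsum G = zsum {?w}" "{?w} \<subseteq> B" by auto
    then have "G = {?w}" using indep_zsum_eq[OF iB G(1), of "{?w}"] by simp
    then show False using G(2) \<open>?w \<in> B - {k}\<close> by auto
  qed
  let ?B' = "insert ?w (B - {k})"
  have wE: "?w \<in> EE n" using EE_zsum[OF fG] G BE by blast
  have B'E: "?B' \<subseteq> EE n" using wE BE by auto
  have fB': "finite ?B'" using fB by simp
  have iB': "indep ?B'"
    unfolding indep_def
  proof (intro conjI allI impI)
    show "finite ?B'" by (rule fB')
  next
    fix F assume F: "F \<subseteq> ?B'" "F \<noteq> {}"
    have fF: "finite F" using F fB' finite_subset by blast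
    show "zsum F \<noteq> {}"
    proof (cases "?w \<in> F")
      case False
      then have "F \<subseteq> B" using F by auto
      then show ?thesis using iB F unfolding indep_def by blast
    next
      case True
      let ?F'' = "F - {?w}"
      have F''B: "?F'' \<subseteq> B - {k}" using F by auto
      have fF'': "finite ?F''" using fF by simp
      have "zsum F = zadd ?w (zsum ?F'')" using True fF zsum_insert[of ?F'' ?w]
        by (simp add: insert_absorb)
      also have "\<dots> = zsum (zadd G ?F'')" using zsum_zadd[OF fG fF''] by simp
      finally have eq: "zsum F = zsum (zadd G ?F'')" .
      have "zadd G ?F'' \<subseteq> B" using zadd_subset[of G ?F''] G F''B by blast
      moreover have "k \<in> zadd G ?F''" using G F''B unfolding zadd_def by auto
      ultimately have "zsum (zadd G ?F'') \<noteq> {}" using iB unfolding indep_def by blast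
      then show ?thesis using eq by simp
    qed
  qed
  have kB: "k \<in> B" using G by blast
  have "card ?B' = Suc (card (B - {k}))" using wn fB by simp
  also have "card (B - {k}) = card B - 1" using kB fB by simp
  also have "card B > 0" using kB fB card_gt_0_iff by blast
  then have "Suc (card B - 1) = card B" by simp
  finally have cB': "card ?B' = card B" .
  have "zspan ?B' \<subseteq> EE n" using B'E sB zspan_subset_closed by metis
  moreover have "card (zspan ?B') = card (EE n)" using card_zspan[OF iB'] card_zspan[OF iB] cB' sB by simp
  ultimately have "zspan ?B' = EE n" using finite_EE by (intro card_subset_eq) auto
  then show "?B' \<in> bases n" unfolding bases_def using B'E iB' by blast
qed

lemma exchange_sum:
  fixes f :: "nat set \<Rightarrow> real"
  assumes B: "B \<in> bases n" and G: "G \<subseteq> B" "k \<in> G"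
  shows "(\<Sum>x\<in>insert (zsum G) (B - {k}). f x) = (\<Sum>x\<in>B. f x) - f k + f (zsum G)"
proof -
  have fB: "finite B" using B unfolding bases_def indep_def by auto
  have "(\<Sum>x\<in>insert (zsum G) (B - {k}). f x) = f (zsum G) + (\<Sum>x\<in>B - {k}. f x)"
    using exchange(1)[OF assms] fB by simp
  also have "(\<Sum>x\<in>B - {k}. f x) = (\<Sum>x\<in>B. f x) - f k" using fB G by (subst sum_diff1) auto
  finally show ?thesis by simp
qed

lemma ex_min_real:
  fixes f :: "'a \<Rightarrow> real"
  assumes "finite S" "S \<noteq> {}"
  shows "\<exists>x\<in>S. \<forall>y\<in>S. f x \<le> f y"
proof -
  have "Min (f ` S) \<in> f ` S" using assms by simp
  then obtain x where "x \<in> S" "f x = Min (f ` S)" by auto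
  moreover have "\<forall>y\<in>S. Min (f ` S) \<le> f y" using assms by simp
  ultimately show ?thesis by metis
qed

lemma ex_max_real:
  fixes f :: "'a \<Rightarrow> real"
  assumes "finite S" "S \<noteq> {}"
  shows "\<exists>x\<in>S. \<forall>y\<in>S. f y \<le> f x"
proof -
  have "Max (f ` S) \<in> f ` S" using assms by simp
  then obtain x where "x \<in> S" "f x = Max (f ` S)" by auto
  moreover have "\<forall>y\<in>S. f y \<le> Max (f ` S)" using assms by simp
  ultimately show ?thesis by metis
qed

definition adapted :: "(nat \<Rightarrow> nat \<Rightarrow> real) \<Rightarrow> nat \<Rightarrow> nat set set \<Rightarrow> bool" where
  "adapted d n B \<longleftrightarrow> (\<forall>F\<subseteq>B. \<forall>w\<in>F. dval d n w \<le> dval d n (zsum F))"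



lemma exists_adapted_basis:
  fixes d1 d2 :: "nat \<Rightarrow> nat \<Rightarrow> real"
  assumes n: "0 < n"
    and nn1: "\<forall>i<n. \<forall>j<n. d1 i j \<ge> 0"
    and nn2: "\<forall>i<n. \<forall>j<n. d2 i j \<ge> 0"
  shows "\<exists>B \<in> bases n. adapted d1 n B \<and> adapted d2 n B"
proof -
  define s1 where "s1 B = (\<Sum>w\<in>B. dval d1 n w)" for B
  define s2 where "s2 B = (\<Sum>w\<in>B. dval d2 n w)" for B
  obtain B1 where B1: "B1 \<in> bases n" "\<forall>B'\<in>bases n. s1 B1 \<le> s1 B'"
    using ex_min_real[OF finite_bases, of n s1] bases_ne[OF n] by blast
  let ?M1 = "{B \<in> bases n. s1 B = s1 B1}"
  have "finite ?M1" using finite_bases by simp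
  moreover have "?M1 \<noteq> {}" using B1 by blast
  ultimately obtain B where BM: "B \<in> ?M1" and Bmin2: "\<forall>B'\<in>?M1. s2 B \<le> s2 B'"
    using ex_min_real[of ?M1 s2] by blast
  have Bb: "B \<in> bases n" and Bmin1: "\<forall>B'\<in>bases n. s1 B \<le> s1 B'" using BM B1 by auto
  have fB: "finite B" using Bb unfolding bases_def indep_def by auto
  have BE: "B \<subseteq> EE n" using Bb unfolding bases_def by auto
  have ad1: "adapted d1 n B"
    unfolding adapted_def
  proof (intro allI impI ballI)
    fix F w assume F: "F \<subseteq> B" and w: "w \<in> F"
    show "dval d1 n w \<le> dval d1 n (zsum F)"
    proof (rule ccontr)
      assume less: "\<not> ?thesis"
      have fF: "finite F" using F fB finite_subset by blast
      obtain k where k: "k \<in> F" "\<forall>y\<in>F. dval d1 n y \<le> dval d1 n k"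
        using ex_max_real[OF fF, of "dval d1 n"] w by blast
      have "dval d1 n (zsum F) < dval d1 n k" using less k w by force
      moreover have "s1 (insert (zsum F) (B - {k})) = s1 B - dval d1 n k + dval d1 n (zsum F)"
        unfolding s1_def using exchange_sum[OF Bb F k(1)] by simp
      moreover have "insert (zsum F) (B - {k}) \<in> bases n" using exchange(2)[OF Bb F k(1)] .
      ultimately show False using Bmin1 by force
    qed
  qed
  have ad2: "adapted d2 n B"
    unfolding adapted_def
  proof (intro allI impI ballI)
    fix F w0 assume F: "F \<subseteq> B" and w0: "w0 \<in> F"
    show "dval d2 n w0 \<le> dval d2 n (zsum F)"
    proof (rule ccontr)
      assume less: "\<not> ?thesis"
      have fF: "finite F" using F fB finite_subset by blast
      have FE: "F \<subseteq> EE n" using F BE by blast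
      define m where "m = Max (dval d2 n ` F)"
      have w0m: "dval d2 n w0 \<le> m" unfolding m_def using fF w0 by simp
      define F' where "F' = {w \<in> F. dval d2 n w = m}"
      have "m \<in> dval d2 n ` F" unfolding m_def using fF w0 by (intro Max_in) auto
      then have F'ne: "F' \<noteq> {}" unfolding F'_def by auto
      have fF': "finite F'" unfolding F'_def using fF by simp
      have F'F: "F' \<subseteq> F" unfolding F'_def by auto
      obtain k where k: "k \<in> F'" "\<forall>y\<in>F'. dval d1 n y \<le> dval d1 n k"
        using ex_max_real[OF fF' F'ne, of "dval d1 n"] by blast
      have kF: "k \<in> F" and km: "dval d2 n k = m" using k unfolding F'_def by auto
      let ?w = "zsum F'"
      have F'B: "F' \<subseteq> B" using F'F F by blast
      have F'E: "F' \<subseteq> EE n" using F'F FE by blast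
      have kE: "k \<in> EE n" using kF FE by blast
      have d1w: "dval d1 n ?w \<le> dval d1 n k"
        using dval_zsum_le[OF nn1 fF' F'E dval_nonneg[OF nn1 kE]] k(2) by blast
      have wsplit: "?w = zadd (zsum F) (zsum (F - F'))"
      proof -
        have "zadd F (F - F') = F'" unfolding zadd_def using F'F by auto
        then show ?thesis using zsum_zadd[OF fF, of "F - F'"] fF by simp
      qed
      define c where "c = Max (insert (dval d2 n (zsum F)) (dval d2 n ` (F - F')))"
      have fc: "finite (insert (dval d2 n (zsum F)) (dval d2 n ` (F - F')))" using fF by simp
      have sumFE: "zsum F \<in> EE n" using EE_zsum[OF fF FE] .
      have c0: "0 \<le> c" unfolding c_def using fc dval_nonneg[OF nn2 sumFE]
        by (meson Max_ge insertI1 order_trans)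
      have cm: "c < m"
      proof -
        have "\<forall>x\<in>insert (dval d2 n (zsum F)) (dval d2 n ` (F - F')). x < m"
        proof
          fix x assume "x \<in> insert (dval d2 n (zsum F)) (dval d2 n ` (F - F'))"
          then consider "x = dval d2 n (zsum F)" | y where "y \<in> F - F'" "x = dval d2 n y" by blast
          then show "x < m"
          proof cases
            case 1 then show ?thesis using less w0m by simp
          next
            case 2
            then have "dval d2 n y \<le> m" "dval d2 n y \<noteq> m" unfolding m_def F'_def using fF by auto
            then show ?thesis using 2 by simp
          qed
        qed
        then show ?thesis unfolding c_def using fc Max_in by blast
      qed
      have "\<forall>y\<in>F - F'. dval d2 n y \<le> c" unfolding c_def using fc by (auto intro: Max_ge)
      moreover have "F - F' \<subseteq> EE n" using FE by blast
      ultimately have "dval d2 n (zsum (F - F')) \<le> c"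
        using dval_zsum_le[OF nn2 _ _ c0] fF by blast
      moreover have "dval d2 n (zsum F) \<le> c" unfolding c_def using fc by (intro Max_ge) auto
      moreover have "zsum (F - F') \<in> EE n" using EE_zsum fF FE by (meson Diff_subset finite_Diff subset_trans)
      ultimately have "dval d2 n ?w \<le> c" unfolding wsplit using dval_zadd_le[OF nn2 sumFE _ c0] by blast
      then have d2w: "dval d2 n ?w < dval d2 n k" using cm km by simp
      let ?B' = "insert ?w (B - {k})"
      have B'b: "?B' \<in> bases n" using exchange(2)[OF Bb F'B k(1)] .
      have "s1 ?B' = s1 B - dval d1 n k + dval d1 n ?w"
        unfolding s1_def using exchange_sum[OF Bb F'B k(1)] by simp
      then have "s1 ?B' \<le> s1 B" using d1w by simp
      then have "s1 ?B' = s1 B1" using Bmin1 B'b BM by force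
      then have "?B' \<in> ?M1" using B'b by simp
      then have "s2 B \<le> s2 ?B'" using Bmin2 by blast
      moreover have "s2 ?B' = s2 B - dval d2 n k + dval d2 n ?w"
        unfolding s2_def using exchange_sum[OF Bb F'B k(1)] by simp
      ultimately show False using d2w by simp
    qed
  qed
  show ?thesis using Bb ad1 ad2 by blast
qed



context
  fixes d :: "nat \<Rightarrow> nat \<Rightarrow> real" and n :: nat and B :: "nat set set"
  assumes nonneg: "\<forall>i<n. \<forall>j<n. d i j \<ge> 0"
    and Bb: "B \<in> bases n" and ad: "adapted d n B"
begin

lemma B_EE: "B \<subseteq> EE n" using Bb unfolding bases_def by auto
lemma B_indep: "indep B" using Bb unfolding bases_def by auto
lemma B_finite: "finite B" using B_indep unfolding indep_def by auto
lemma B_span: "zspan B = EE n" using Bb unfolding bases_def by auto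

lemma adapted_ker:
  assumes F: "F \<subseteq> B" and a: "0 \<le> a"
  shows "zsum F \<in> ker_plus d n a \<longleftrightarrow> (\<forall>w\<in>F. dval d n w \<le> a)"
proof -
  have fF: "finite F" using F B_finite finite_subset by blast
  have FE: "F \<subseteq> EE n" using F B_EE by blast
  have sE: "zsum F \<in> EE n" using EE_zsum[OF fF FE] .
  show ?thesis
  proof
    assume "zsum F \<in> ker_plus d n a"
    then have "dval d n (zsum F) \<le> a" using dval_le_iff[OF sE a] by simp
    then show "\<forall>w\<in>F. dval d n w \<le> a" using ad F unfolding adapted_def by force
  next
    assume "\<forall>w\<in>F. dval d n w \<le> a"
    then have "dval d n (zsum F) \<le> a" using dval_zsum_le[OF nonneg fF FE a] by blast
    then show "zsum F \<in> ker_plus d n a" using dval_le_iff[OF sE a] by simp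
  qed
qed

lemma adapted_ker_plus:
  assumes a: "0 \<le> a"
  shows "ker_plus d n a = zspan {w \<in> B. dval d n w \<le> a}"
proof
  show "ker_plus d n a \<subseteq> zspan {w \<in> B. dval d n w \<le> a}"
  proof
    fix v assume v: "v \<in> ker_plus d n a"
    then have "v \<in> zspan B" using ker_plus_EE B_span by blast
    then obtain F where F: "F \<subseteq> B" "v = zsum F" using B_finite by (auto simp: zspan_eq)
    then have "\<forall>w\<in>F. dval d n w \<le> a" using adapted_ker[OF F(1) a] v by simp
    then have "F \<subseteq> {w \<in> B. dval d n w \<le> a}" using F by auto
    then show "v \<in> zspan {w \<in> B. dval d n w \<le> a}" using F B_finite
      by (auto simp: zspan_eq)
  qed
  show "zspan {w \<in> B. dval d n w \<le> a} \<subseteq> ker_plus d n a"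
  proof
    fix v assume "v \<in> zspan {w \<in> B. dval d n w \<le> a}"
    then obtain F where F: "F \<subseteq> {w \<in> B. dval d n w \<le> a}" "v = zsum F" using B_finite by (auto simp: zspan_eq)
    then show "v \<in> ker_plus d n a" using adapted_ker[of F a] a by auto
  qed
qed

lemma adapted_ker_minus:
  assumes a: "0 \<le> a"
  shows "ker_minus d n a = zspan {w \<in> B. dval d n w < a}"
proof
  show "ker_minus d n a \<subseteq> zspan {w \<in> B. dval d n w < a}"
  proof
    fix v assume v: "v \<in> ker_minus d n a"
    then have vE: "v \<in> EE n" and vv: "v = {} \<or> dval d n v < a" using ker_minus_char[OF nonneg a] by auto
    have "v \<in> zsum ` Pow B" using vE B_span B_finite zspan_eq by metis
    then obtain F where F: "F \<subseteq> B" "v = zsum F" by blast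
    have "\<forall>w\<in>F. dval d n w < a"
    proof (cases "v = {}")
      case True
      then have "F = {}" using F B_indep unfolding indep_def by blast
      then show ?thesis by simp
    next
      case False
      then have "dval d n v < a" using vv by simp
      moreover have "\<forall>w\<in>F. dval d n w \<le> dval d n v" using ad F unfolding adapted_def by blast
      ultimately show ?thesis by force
    qed
    then have "F \<subseteq> {w \<in> B. dval d n w < a}" using F by auto
    then show "v \<in> zspan {w \<in> B. dval d n w < a}" using F B_finite by (auto simp: zspan_eq)
  qed
  show "zspan {w \<in> B. dval d n w < a} \<subseteq> ker_minus d n a"
  proof
    fix v assume "v \<in> zspan {w \<in> B. dval d n w < a}"
    then obtain F where F: "F \<subseteq> {w \<in> B. dval d n w < a}" "v = zsum F" using B_finite by (auto simp: zspan_eq)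
    have FB: "F \<subseteq> B" using F by auto
    have fF: "finite F" using FB B_finite finite_subset by blast
    have FE: "F \<subseteq> EE n" using FB B_EE by blast
    have vE: "v \<in> EE n" using EE_zsum[OF fF FE] F by simp
    have "v = {} \<or> dval d n v < a"
    proof (cases "F = {}")
      case True then show ?thesis using F by simp
    next
      case False
      let ?c = "Max (dval d n ` F)"
      have "?c \<in> dval d n ` F" using fF False by simp
      then have ca: "?c < a" using F by auto
      have "\<forall>w\<in>F. dval d n w \<le> ?c" using fF by simp
      moreover have "0 \<le> ?c" using \<open>?c \<in> dval d n ` F\<close> dval_nonneg[OF nonneg] FE by auto
      ultimately have "dval d n v \<le> ?c" using dval_zsum_le[OF nonneg fF FE] F by blast
      then show ?thesis using ca by simp
    qed
    then show "v \<in> ker_minus d n a" using ker_minus_char[OF nonneg a] vE by simp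
  qed
qed

end

lemma block_fun_count:
  fixes dx dz :: "nat \<Rightarrow> nat \<Rightarrow> real"
  assumes nnx: "\<forall>i<n. \<forall>j<n. dx i j \<ge> 0" and nnz: "\<forall>i<n. \<forall>j<n. dz i j \<ge> 0"
    and Bb: "B \<in> bases n" and adx: "adapted dx n B" and adz: "adapted dz n B"
    and a: "0 \<le> a" and b: "0 \<le> b"
  shows "block_fun dx dz n a b = card {w \<in> B. dval dx n w = a \<and> dval dz n w = b}"
proof -
  let ?PX = "{w \<in> B. dval dx n w \<le> a}" and ?QX = "{w \<in> B. dval dx n w < a}"
  let ?PZ = "{w \<in> B. dval dz n w \<le> b}" and ?QZ = "{w \<in> B. dval dz n w < b}"
  have iB: "indep B" using Bb unfolding bases_def by auto
  have fB: "finite B" using iB unfolding indep_def by auto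
  have e1: "ker_plus dx n a \<inter> ker_plus dz n b = zspan (?PX \<inter> ?PZ)"
    using adapted_ker_plus[OF nnx Bb adx a] adapted_ker_plus[OF nnz Bb adz b] zspan_inter[OF iB] by auto
  have e2: "ker_minus dx n a \<inter> ker_plus dz n b = zspan (?QX \<inter> ?PZ)"
    using adapted_ker_minus[OF nnx Bb adx a] adapted_ker_plus[OF nnz Bb adz b] zspan_inter[OF iB] by auto
  have e3: "ker_plus dx n a \<inter> ker_minus dz n b = zspan (?PX \<inter> ?QZ)"
    using adapted_ker_plus[OF nnx Bb adx a] adapted_ker_minus[OF nnz Bb adz b] zspan_inter[OF iB] by auto
  have e4: "subspace_sum (zspan (?QX \<inter> ?PZ)) (zspan (?PX \<inter> ?QZ)) = zspan ((?QX \<inter> ?PZ) \<union> (?PX \<inter> ?QZ))"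
    using fB by (intro subspace_sum_zspan) auto
  have "block_fun dx dz n a b = quot_dim (zspan (?PX \<inter> ?PZ)) (zspan ((?QX \<inter> ?PZ) \<union> (?PX \<inter> ?QZ)))"
    unfolding block_fun_def e1 e2 e3 e4 ..
  also have "\<dots> = card ((?PX \<inter> ?PZ) - ((?QX \<inter> ?PZ) \<union> (?PX \<inter> ?QZ)))"
    using iB by (intro quot_dim_zspan) auto
  also have "(?PX \<inter> ?PZ) - ((?QX \<inter> ?PZ) \<union> (?PX \<inter> ?QZ)) = {w \<in> B. dval dx n w = a \<and> dval dz n w = b}"
    by auto
  finally show ?thesis .
qed



lemma ivl_dead:
  assumes "0 \<le> a" "0 \<le> r"
  shows "\<not> ivl a r \<longleftrightarrow> (0 < r \<and> a \<le> r)"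
  using assms unfolding ivl_def by auto

lemma ivl_mono:
  assumes "0 \<le> r" "r \<le> s" "ivl a s"
  shows "ivl a r"
  using assms unfolding ivl_def by (auto split: if_splits)

lemma ivl_le:
  assumes "0 \<le> b" "b \<le> a" "0 \<le> r" "ivl b r"
  shows "ivl a r"
  using assms unfolding ivl_def by (auto split: if_splits)

lemma image_zadd:
  assumes "inj_on f (X \<union> Y)"
  shows "f ` zadd X Y = zadd (f ` X) (f ` Y)"
  using assms unfolding zadd_def inj_on_def by blast

lemma vsp_zadd: "u \<in> vsp A \<Longrightarrow> v \<in> vsp A \<Longrightarrow> zadd u v \<in> vsp A"
proof -
  assume "u \<in> vsp A" "v \<in> vsp A"
  then show ?thesis unfolding vsp_def using finite_zadd[of u v] zadd_subset[of u v] by auto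
qed

locale blkset =
  fixes n :: nat and dx dz :: "nat \<Rightarrow> nat \<Rightarrow> real" and B :: "nat set set"
  assumes n: "0 < n"
    and nnx: "\<forall>i<n. \<forall>j<n. dx i j \<ge> 0" and nnz: "\<forall>i<n. \<forall>j<n. dz i j \<ge> 0"
    and Bb: "B \<in> bases n" and adx: "adapted dx n B" and adz: "adapted dz n B"
    and le: "\<forall>w\<in>B. dval dz n w \<le> dval dx n w"
begin

definition B0 :: "nat set set" where "B0 = insert {0} B"

definition coord :: "nat set \<Rightarrow> nat set set" where
  "coord v = (THE F. F \<subseteq> B0 \<and> zsum F = v)"

definition cls :: "real \<Rightarrow> real \<Rightarrow> nat set set" where
  "cls a b = {w \<in> B. dval dx n w = a \<and> dval dz n w = b}"

definition hh :: "real \<Rightarrow> real \<Rightarrow> nat set \<Rightarrow> nat" where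
  "hh a b = (SOME h. bij_betw h (cls a b) {0..<card (cls a b)})"

definition tag :: "nat set \<Rightarrow> (real \<times> real \<times> nat) option" where
  "tag w = (if w = {0} then None else Some (dval dx n w, dval dz n w, hh (dval dx n w) (dval dz n w) w))"

definition MM :: "real \<Rightarrow> real \<Rightarrow> nat" where "MM = block_fun dx dz n"

definition alive :: "(nat \<Rightarrow> nat \<Rightarrow> real) \<Rightarrow> real \<Rightarrow> nat set \<Rightarrow> bool" where
  "alive d r w \<longleftrightarrow> w = {0} \<or> ivl (dval d n w) r"

definition Phi :: "(nat \<Rightarrow> nat \<Rightarrow> real) \<Rightarrow> real \<Rightarrow> nat set \<Rightarrow> (real \<times> real \<times> nat) option set" where
  "Phi d r v = tag ` {w \<in> coord v. alive d r w}"

definition alpha :: "(nat \<Rightarrow> nat \<Rightarrow> real) \<Rightarrow> real \<Rightarrow> nat set set \<Rightarrow> (real \<times> real \<times> nat) option set" where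
  "alpha d r S = Phi d r (lift S)"

lemma dd_props:
  assumes "d \<in> {dx, dz}"
  shows "\<forall>i<n. \<forall>j<n. d i j \<ge> 0" "adapted d n B"
  using assms nnx nnz adx adz by auto

lemma BE: "B \<subseteq> EE n" using Bb unfolding bases_def by auto
lemma iB: "indep B" using Bb unfolding bases_def by auto
lemma fB: "finite B" using iB unfolding indep_def by auto
lemma sB: "zspan B = EE n" using Bb unfolding bases_def by auto
lemma zero_notin_B: "{0} \<notin> B" using BE single0_notin_EE by blast

lemma B0_indep: "indep B0"
  unfolding indep_def
proof (intro conjI allI impI)
  show "finite B0" unfolding B0_def using fB by simp
next
  fix F assume F: "F \<subseteq> B0" "F \<noteq> {}"
  show "zsum F \<noteq> {}"
  proof (cases "{0} \<in> F")
    case False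
    then have "F \<subseteq> B" using F unfolding B0_def by auto
    then show ?thesis using iB F unfolding indep_def by blast
  next
    case True
    let ?F1 = "F - {{0}}"
    have F1B: "?F1 \<subseteq> B" using F unfolding B0_def by auto
    have fF1: "finite ?F1" using F1B fB rev_finite_subset by blast
    have "zsum F = zadd {0} (zsum ?F1)" using zsum_insert[OF fF1, of "{0}"] True by (simp add: insert_absorb)
    moreover have "zsum ?F1 \<in> EE n" using EE_zsum[OF fF1] F1B BE by blast
    ultimately show ?thesis using single0_notin_EE by (metis zadd_empty(1) zadd_eq_empty)
  qed
qed

lemma fB0: "finite B0" using B0_indep unfolding indep_def by auto

lemma B0_sub: "w \<in> B0 \<Longrightarrow> finite w \<and> w \<subseteq> {..<n}"
  unfolding B0_def using n BE EE_sub EE_finite_elem by auto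

lemma zsum_B0_vsp: "F \<subseteq> B0 \<Longrightarrow> zsum F \<in> vsp {..<n}"
proof -
  assume F: "F \<subseteq> B0"
  have fF: "finite F" using F fB0 rev_finite_subset by blast
  have "zsum F \<subseteq> \<Union>F" by (rule zsum_subset)
  also have "\<dots> \<subseteq> {..<n}" using F B0_sub by blast
  finally show ?thesis unfolding vsp_def using finite_zsum[OF fF] F B0_sub by blast
qed

lemma B0_span:
  assumes "v \<in> vsp {..<n}"
  shows "\<exists>F\<subseteq>B0. zsum F = v"
proof -
  have v: "finite v" "v \<subseteq> {..<n}" using assms unfolding vsp_def by auto
  have "v \<in> EE n \<or> zadd {0} v \<in> EE n" using split_EE[OF n v] .
  then show ?thesis
  proof
    assume "v \<in> EE n"
    then have "v \<in> zsum ` Pow B" using sB fB zspan_eq by metis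
    then obtain F where "F \<subseteq> B" "zsum F = v" by blast
    then show ?thesis unfolding B0_def by blast
  next
    assume "zadd {0} v \<in> EE n"
    then have "zadd {0} v \<in> zsum ` Pow B" using sB fB zspan_eq by metis
    then obtain F where F: "F \<subseteq> B" "zsum F = zadd {0} v" by blast
    have fF: "finite F" using F fB rev_finite_subset by blast
    have "zsum (insert {0} F) = zadd {0} (zsum F)" using zsum_insert[OF fF] F zero_notin_B by blast
    also have "\<dots> = v" using F by (simp flip: zadd_assoc)
    finally have "zsum (insert {0} F) = v" .
    moreover have "insert {0} F \<subseteq> B0" using F unfolding B0_def by blast
    ultimately show ?thesis by blast
  qed
qed

lemma coord_zsum:
  assumes "F \<subseteq> B0"
  shows "coord (zsum F) = F"
  unfolding coord_def
proof (rule the_equality)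
  show "F \<subseteq> B0 \<and> zsum F = zsum F" using assms by simp
  fix G assume "G \<subseteq> B0 \<and> zsum G = zsum F"
  then show "G = F" using indep_zsum_eq[OF B0_indep, of G F] assms by blast
qed

lemma coord:
  assumes "v \<in> vsp {..<n}"
  shows "coord v \<subseteq> B0" "zsum (coord v) = v"
proof -
  obtain F where F: "F \<subseteq> B0" "zsum F = v" using B0_span[OF assms] by blast
  then have "coord v = F" using coord_zsum by blast
  then show "coord v \<subseteq> B0" "zsum (coord v) = v" using F by auto
qed

lemma coord_zadd:
  assumes "u \<in> vsp {..<n}" "v \<in> vsp {..<n}"
  shows "coord (zadd u v) = zadd (coord u) (coord v)"
proof -
  have f: "finite (coord u)" "finite (coord v)" using coord(1)[OF assms(1)] coord(1)[OF assms(2)] fB0 rev_finite_subset by blast+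
  have "zadd u v = zsum (zadd (coord u) (coord v))"
    using zsum_zadd[OF f] coord(2)[OF assms(1)] coord(2)[OF assms(2)] by simp
  moreover have "zadd (coord u) (coord v) \<subseteq> B0"
    using zadd_subset[of "coord u" "coord v"] coord(1)[OF assms(1)] coord(1)[OF assms(2)] by blast
  ultimately show ?thesis using coord_zsum by simp
qed

lemma finite_cls: "finite (cls a b)"
  unfolding cls_def using fB by simp

lemma hh_bij: "bij_betw (hh a b) (cls a b) {0..<card (cls a b)}"
  unfolding hh_def using ex_bij_betw_finite_nat[OF finite_cls] by (rule someI_ex)

lemma MM_card:
  assumes "0 \<le> a" "0 \<le> b"
  shows "MM a b = card (cls a b)"
  unfolding MM_def cls_def using block_fun_count[OF nnx nnz Bb adx adz assms] .

lemma tag_inj: "inj_on tag B0"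
proof (rule inj_onI)
  fix w1 w2 assume w: "w1 \<in> B0" "w2 \<in> B0" "tag w1 = tag w2"
  show "w1 = w2"
  proof (cases "w1 = {0} \<or> w2 = {0}")
    case True then show ?thesis using w unfolding tag_def by (auto split: if_splits)
  next
    case False
    then have wB: "w1 \<in> B" "w2 \<in> B" using w unfolding B0_def by auto
    let ?a = "dval dx n w1" and ?b = "dval dz n w1"
    have eq: "dval dx n w2 = ?a" "dval dz n w2 = ?b" "hh ?a ?b w1 = hh ?a ?b w2"
      using w False unfolding tag_def by auto
    have "w1 \<in> cls ?a ?b" "w2 \<in> cls ?a ?b" unfolding cls_def using wB eq by auto
    then show ?thesis using eq(3) hh_bij[of ?a ?b] unfolding bij_betw_def inj_on_def by blast
  qed
qed

lemma dval_nonneg_B: "w \<in> B \<Longrightarrow> d \<in> {dx, dz} \<Longrightarrow> 0 \<le> dval d n w"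
  using dval_nonneg[OF dd_props(1)] BE by blast

lemma tag_in_blk:
  assumes "w \<in> B0"
  shows "tag w \<in> blk_dom MM r \<longleftrightarrow> alive dx r w"
    "tag w \<in> blk_cod MM r \<longleftrightarrow> alive dz r w"
proof -
  have "(tag w \<in> blk_dom MM r \<longleftrightarrow> alive dx r w) \<and> (tag w \<in> blk_cod MM r \<longleftrightarrow> alive dz r w)"
  proof (cases "w = {0}")
    case True then show ?thesis unfolding tag_def alive_def blk_dom_def blk_cod_def by simp
  next
    case False
    then have wB: "w \<in> B" using assms unfolding B0_def by auto
    let ?a = "dval dx n w" and ?b = "dval dz n w"
    have b0: "0 \<le> ?b" using dval_nonneg_B[OF wB] by simp
    have ba: "?b \<le> ?a" using le wB by simp
    have "w \<in> cls ?a ?b" unfolding cls_def using wB by simp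
    then have "hh ?a ?b w < card (cls ?a ?b)" using hh_bij[of ?a ?b] unfolding bij_betw_def by auto
    then have lt: "hh ?a ?b w < MM ?a ?b" using MM_card[of ?a ?b] b0 ba by simp
    show ?thesis unfolding tag_def alive_def blk_dom_def blk_cod_def using False b0 ba lt by auto
  qed
  then show "tag w \<in> blk_dom MM r \<longleftrightarrow> alive dx r w" "tag w \<in> blk_cod MM r \<longleftrightarrow> alive dz r w" by auto
qed

lemma tag_surj:
  "blk_dom MM r \<subseteq> tag ` {w \<in> B0. alive dx r w}"
  "blk_cod MM r \<subseteq> tag ` {w \<in> B0. alive dz r w}"
proof -
  have main: "\<exists>w\<in>B0. tag w = Some (a, b, i)" if "0 \<le> b" "b \<le> a" "i < MM a b" for a b i
  proof -
    have "i < card (cls a b)" using that MM_card[of a b] by simp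
    then have "i \<in> hh a b ` cls a b" using hh_bij[of a b] unfolding bij_betw_def by simp
    then obtain w where w: "w \<in> cls a b" "hh a b w = i" by blast
    then have wB: "w \<in> B" and wa: "dval dx n w = a" and wb: "dval dz n w = b" unfolding cls_def by auto
    have "w \<noteq> {0}" using wB zero_notin_B by auto
    then have "tag w = Some (a, b, i)" unfolding tag_def using wa wb w by simp
    then show ?thesis using wB unfolding B0_def by blast
  qed
  have none: "tag {0} = None" "{0} \<in> B0" unfolding tag_def B0_def by auto
  show "blk_dom MM r \<subseteq> tag ` {w \<in> B0. alive dx r w}"
  proof
    fix y assume y: "y \<in> blk_dom MM r"
    show "y \<in> tag ` {w \<in> B0. alive dx r w}"
    proof (cases y)
      case None then show ?thesis using none unfolding alive_def by force
    next
      case (Some t)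
      then obtain a b i where t: "y = Some (a, b, i)" "0 \<le> b" "b \<le> a" "i < MM a b" "ivl a r"
        using y unfolding blk_dom_def by auto
      then obtain w where "w \<in> B0" "tag w = y" using main by blast
      moreover have "alive dx r w" using tag_in_blk(1)[OF \<open>w \<in> B0\<close>, of r] y \<open>tag w = y\<close> by simp
      ultimately show ?thesis by blast
    qed
  qed
  show "blk_cod MM r \<subseteq> tag ` {w \<in> B0. alive dz r w}"
  proof
    fix y assume y: "y \<in> blk_cod MM r"
    show "y \<in> tag ` {w \<in> B0. alive dz r w}"
    proof (cases y)
      case None then show ?thesis using none unfolding alive_def by force
    next
      case (Some t)
      then obtain a b i where t: "y = Some (a, b, i)" "0 \<le> b" "b \<le> a" "i < MM a b"
        using y unfolding blk_cod_def by auto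
      then obtain w where "w \<in> B0" "tag w = y" using main by blast
      moreover have "alive dz r w" using tag_in_blk(2)[OF \<open>w \<in> B0\<close>, of r] y \<open>tag w = y\<close> by simp
      ultimately show ?thesis by blast
    qed
  qed
qed

end



lemma vredges_mono: "0 \<le> r \<Longrightarrow> r \<le> s \<Longrightarrow> vredges d n r \<subseteq> vredges d n s"
  unfolding vredges_def gedges_def by auto

lemma restrict_gen:
  assumes "\<forall>w\<in>C. P w \<longrightarrow> Q w" "\<forall>w\<in>C. f w \<in> X \<longleftrightarrow> P w"
  shows "f ` {w \<in> C. P w} = f ` {w \<in> C. Q w} \<inter> X"
  using assms by blast

context blkset
begin

lemma pi_zero_coord:
  assumes d: "d \<in> {dx, dz}" and r: "0 \<le> r" and v: "v \<in> vsp {..<n}"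
  shows "pi d n r v = {} \<longleftrightarrow> (\<forall>w\<in>coord v. \<not> alive d r w)"
proof -
  note nn = dd_props(1)[OF d] and ad = dd_props(2)[OF d]
  define F where "F = coord v"
  have FB0: "F \<subseteq> B0" and vF: "zsum F = v" using coord[OF v] unfolding F_def by auto
  have fv: "finite v" "v \<subseteq> {..<n}" using v unfolding vsp_def by auto
  have dead_iff: "\<not> alive d r w \<longleftrightarrow> (0 < r \<and> dval d n w \<le> r)" if wB: "w \<in> B" for w
  proof -
    have "w \<noteq> {0}" using wB zero_notin_B by auto
    then show ?thesis unfolding alive_def using ivl_dead[OF dval_nonneg_B[OF wB d] r] by simp
  qed
  have piz: "pi d n r v = {} \<longleftrightarrow> v = {} \<or> (0 < r \<and> v \<in> ker_plus d n r)"
    using pi_zero_iff[OF fv] by simp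
  show ?thesis unfolding F_def[symmetric]
  proof
    assume "pi d n r v = {}"
    then have "v = {} \<or> (0 < r \<and> v \<in> ker_plus d n r)" using piz by simp
    then show "\<forall>w\<in>F. \<not> alive d r w"
    proof
      assume "v = {}"
      then have "F = {}" using coord_zsum[of "{}"] F_def by simp
      then show ?thesis by simp
    next
      assume rv: "0 < r \<and> v \<in> ker_plus d n r"
      have "{0} \<notin> F"
      proof
        assume z: "{0} \<in> F"
        let ?F1 = "F - {{0}}"
        have F1B: "?F1 \<subseteq> B" using FB0 unfolding B0_def by auto
        have fF1: "finite ?F1" using F1B fB rev_finite_subset by blast
        have "v = zadd {0} (zsum ?F1)" using vF zsum_insert[OF fF1, of "{0}"] z by (simp add: insert_absorb)
        then have "zadd v (zsum ?F1) = {0}" by (simp add: zadd_assoc)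
        moreover have "zsum ?F1 \<in> EE n" using EE_zsum[OF fF1] F1B BE by blast
        moreover have "v \<in> EE n" using rv ker_plus_EE by blast
        ultimately show False using EE_zadd single0_notin_EE by metis
      qed
      then have FB: "F \<subseteq> B" using FB0 unfolding B0_def by auto
      have "\<forall>w\<in>F. dval d n w \<le> r" using adapted_ker[OF nn Bb ad FB r] rv vF by simp
      then show ?thesis using dead_iff FB rv by blast
    qed
  next
    assume dead: "\<forall>w\<in>F. \<not> alive d r w"
    then have FB: "F \<subseteq> B" using FB0 unfolding B0_def alive_def by auto
    show "pi d n r v = {}"
    proof (cases "F = {}")
      case True then show ?thesis using vF piz by simp
    next
      case False
      then obtain w where "w \<in> F" by auto
      then have r0: "0 < r" using dead dead_iff FB by blast
      have "\<forall>w\<in>F. dval d n w \<le> r" using dead dead_iff FB by blast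
      then have "v \<in> ker_plus d n r" using adapted_ker[OF nn Bb ad FB r] vF by simp
      then show ?thesis using piz r0 by simp
    qed
  qed
qed

lemma coord_finite: "v \<in> vsp {..<n} \<Longrightarrow> finite (coord v)"
  using coord(1) fB0 rev_finite_subset by blast

lemma Phi_zero:
  assumes d: "d \<in> {dx, dz}" and r: "0 \<le> r" and v: "v \<in> vsp {..<n}"
  shows "Phi d r v = {} \<longleftrightarrow> pi d n r v = {}"
  unfolding Phi_def using pi_zero_coord[OF assms] by auto

lemma Phi_zadd:
  assumes u: "u \<in> vsp {..<n}" and v: "v \<in> vsp {..<n}"
  shows "Phi d r (zadd u v) = zadd (Phi d r u) (Phi d r v)"
proof -
  have "Phi d r (zadd u v) = tag ` zadd {w \<in> coord u. alive d r w} {w \<in> coord v. alive d r w}"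
    unfolding Phi_def coord_zadd[OF u v] zadd_filter ..
  also have "\<dots> = zadd (Phi d r u) (Phi d r v)" unfolding Phi_def
    using coord(1)[OF u] coord(1)[OF v] by (intro image_zadd inj_on_subset[OF tag_inj]) auto
  finally show ?thesis .
qed

lemma Phi_cong:
  assumes d: "d \<in> {dx, dz}" and r: "0 \<le> r" and u: "u \<in> vsp {..<n}" and v: "v \<in> vsp {..<n}"
    and eq: "pi d n r u = pi d n r v"
  shows "Phi d r u = Phi d r v"
proof -
  have uv: "zadd u v \<in> vsp {..<n}" using vsp_zadd[OF u v] .
  have "pi d n r (zadd u v) = {}" using pi_zadd[of u v d n r] u v eq unfolding vsp_def by simp
  then have "Phi d r (zadd u v) = {}" using Phi_zero[OF d r uv] by simp
  then show ?thesis using Phi_zadd[OF u v] by (simp add: zadd_eq_empty)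
qed

lemma alive_mono: "0 \<le> r \<Longrightarrow> r \<le> s \<Longrightarrow> alive d s w \<Longrightarrow> alive d r w"
  unfolding alive_def using ivl_mono by blast

lemma alive_zx:
  assumes "w \<in> B0" "0 \<le> r" "alive dz r w"
  shows "alive dx r w"
proof (cases "w = {0}")
  case True then show ?thesis unfolding alive_def by simp
next
  case False
  then have wB: "w \<in> B" and iv: "ivl (dval dz n w) r" using assms unfolding B0_def alive_def by auto
  have "0 \<le> dval dz n w" using dval_nonneg_B[OF wB] by simp
  moreover have "dval dz n w \<le> dval dx n w" using le wB by simp
  ultimately have "ivl (dval dx n w) r" using ivl_le assms(2) iv by blast
  then show ?thesis unfolding alive_def by simp
qed

lemma Phi_vsp:
  assumes v: "v \<in> vsp {..<n}"
  shows "Phi dx r v \<in> vsp (blk_dom MM r)" "Phi dz r v \<in> vsp (blk_cod MM r)"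
proof -
  have f: "finite (coord v)" using coord_finite[OF v] .
  show "Phi dx r v \<in> vsp (blk_dom MM r)" unfolding vsp_def Phi_def
    using f tag_in_blk(1) coord(1)[OF v] by auto
  show "Phi dz r v \<in> vsp (blk_cod MM r)" unfolding vsp_def Phi_def
    using f tag_in_blk(2) coord(1)[OF v] by auto
qed

lemma Phi_restrict:
  assumes r: "0 \<le> r" "r \<le> s" and v: "v \<in> vsp {..<n}"
  shows "Phi dx s v = Phi dx r v \<inter> blk_dom MM s"
    "Phi dz s v = Phi dz r v \<inter> blk_cod MM s"
    "Phi dz r v = Phi dx r v \<inter> blk_cod MM r"
proof -
  have cB0: "coord v \<subseteq> B0" using coord(1)[OF v] .
  show "Phi dx s v = Phi dx r v \<inter> blk_dom MM s" unfolding Phi_def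
    using cB0 alive_mono[OF r] tag_in_blk(1) by (intro restrict_gen) blast+
  show "Phi dz s v = Phi dz r v \<inter> blk_cod MM s" unfolding Phi_def
    using cB0 alive_mono[OF r] tag_in_blk(2) by (intro restrict_gen) blast+
  show "Phi dz r v = Phi dx r v \<inter> blk_cod MM r" unfolding Phi_def
    using cB0 alive_zx r(1) tag_in_blk(2) by (intro restrict_gen) blast+
qed

lemma Phi_surj:
  assumes T: "T \<in> vsp (blk_dom MM r)"
  shows "\<exists>v\<in>vsp {..<n}. Phi dx r v = T"
proof -
  define F where "F = {w \<in> B0. alive dx r w \<and> tag w \<in> T}"
  have FB0: "F \<subseteq> B0" unfolding F_def by auto
  let ?v = "zsum F"
  have v: "?v \<in> vsp {..<n}" using zsum_B0_vsp[OF FB0] .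
  have "Phi dx r ?v = tag ` F" unfolding Phi_def coord_zsum[OF FB0] unfolding F_def by auto
  also have "\<dots> = T"
  proof
    show "tag ` F \<subseteq> T" unfolding F_def by auto
    show "T \<subseteq> tag ` F"
    proof
      fix y assume "y \<in> T"
      then have "y \<in> blk_dom MM r" using T unfolding vsp_def by auto
      then obtain w where "w \<in> B0" "alive dx r w" "tag w = y" using tag_surj(1) by blast
      then show "y \<in> tag ` F" unfolding F_def using \<open>y \<in> T\<close> by blast
    qed
  qed
  finally show ?thesis using v by blast
qed

lemma Phi_surj_cod:
  assumes T: "T \<in> vsp (blk_cod MM r)"
  shows "\<exists>v\<in>vsp {..<n}. Phi dz r v = T"
proof -
  define F where "F = {w \<in> B0. alive dz r w \<and> tag w \<in> T}"
  have FB0: "F \<subseteq> B0" unfolding F_def by auto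
  let ?v = "zsum F"
  have v: "?v \<in> vsp {..<n}" using zsum_B0_vsp[OF FB0] .
  have "Phi dz r ?v = tag ` F" unfolding Phi_def coord_zsum[OF FB0] unfolding F_def by auto
  also have "\<dots> = T"
  proof
    show "tag ` F \<subseteq> T" unfolding F_def by auto
    show "T \<subseteq> tag ` F"
    proof
      fix y assume "y \<in> T"
      then have "y \<in> blk_cod MM r" using T unfolding vsp_def by auto
      then obtain w where "w \<in> B0" "alive dz r w" "tag w = y" using tag_surj(2) by blast
      then show "y \<in> tag ` F" unfolding F_def using \<open>y \<in> T\<close> by blast
    qed
  qed
  finally show ?thesis using v by blast
qed

lemma lift_in_vsp: "S \<in> vsp (H0gen d n r) \<Longrightarrow> lift S \<in> vsp {..<n}"
proof -
  assume S: "S \<in> vsp (H0gen d n r)"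
  show ?thesis using lift_vsp[OF S] by (simp add: vsp_def)
qed

lemma alpha_pi:
  assumes d: "d \<in> {dx, dz}" and r: "0 \<le> r" and v: "v \<in> vsp {..<n}"
  shows "alpha d r (pi d n r v) = Phi d r v"
proof -
  have fv: "finite v" "v \<subseteq> {..<n}" using v unfolding vsp_def by auto
  have pv: "pi d n r v \<in> vsp (H0gen d n r)" using pi_vsp[OF fv] .
  show ?thesis unfolding alpha_def
    using Phi_cong[OF d r lift_in_vsp[OF pv] v] pi_lift[OF pv] by simp
qed

lemma alpha_zadd:
  assumes S: "S \<in> vsp (H0gen d n r)" and T: "T \<in> vsp (H0gen d n r)"
  shows "alpha d' r (zadd S T) = zadd (alpha d' r S) (alpha d' r T)"
proof -
  have "finite S" "finite T" using S T unfolding vsp_def by auto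
  then have "lift (zadd S T) = zadd (lift S) (lift T)" by (rule lift_zadd)
  then show ?thesis unfolding alpha_def using Phi_zadd[OF lift_in_vsp[OF S] lift_in_vsp[OF T]] by simp
qed

lemma alpha_inj:
  assumes d: "d \<in> {dx, dz}" and r: "0 \<le> r"
  shows "inj_on (alpha d r) (vsp (H0gen d n r))"
proof (rule inj_onI)
  fix S T assume S: "S \<in> vsp (H0gen d n r)" and T: "T \<in> vsp (H0gen d n r)" and eq: "alpha d r S = alpha d r T"
  have lS: "lift S \<in> vsp {..<n}" and lT: "lift T \<in> vsp {..<n}" using lift_in_vsp S T by blast+
  have "Phi d r (zadd (lift S) (lift T)) = {}" using eq Phi_zadd[OF lS lT] unfolding alpha_def by simp
  then have "pi d n r (zadd (lift S) (lift T)) = {}" using Phi_zero[OF d r vsp_zadd[OF lS lT]] by simp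
  then have "zadd (pi d n r (lift S)) (pi d n r (lift T)) = {}"
    using pi_zadd[of "lift S" "lift T" d n r] lS lT unfolding vsp_def by simp
  then have "zadd S T = {}" using pi_lift[OF S] pi_lift[OF T] by simp
  then show "S = T" by (simp add: zadd_eq_empty)
qed

lemma alpha_piso:
  assumes d: "d \<in> {dx, dz}"
    and Cv: "\<And>r v. 0 \<le> r \<Longrightarrow> v \<in> vsp {..<n} \<Longrightarrow> Phi d r v \<in> vsp (C r)"
    and Csurj: "\<And>r T. 0 \<le> r \<Longrightarrow> T \<in> vsp (C r) \<Longrightarrow> \<exists>v\<in>vsp {..<n}. Phi d r v = T"
    and Cres: "\<And>r s v. 0 \<le> r \<Longrightarrow> r \<le> s \<Longrightarrow> v \<in> vsp {..<n} \<Longrightarrow> Phi d s v = Phi d r v \<inter> C s"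
    and sig: "\<And>r s T. \<sigma> r s T = T \<inter> C s"
  shows "is_piso (H0gen d n) (PH0rho d n) C \<sigma> (alpha d)"
  unfolding is_piso_def is_pmor_def
proof (intro conjI allI impI ballI)
  fix r :: real assume r: "0 \<le> r"
  show "zlinear (H0gen d n r) (C r) (alpha d r)"
    unfolding zlinear_def
  proof (intro conjI ballI)
    fix S assume S: "S \<in> vsp (H0gen d n r)"
    show "alpha d r S \<in> vsp (C r)" unfolding alpha_def using Cv[OF r lift_in_vsp[OF S]] .
  next
    fix S T assume "S \<in> vsp (H0gen d n r)" "T \<in> vsp (H0gen d n r)"
    then show "alpha d r (zadd S T) = zadd (alpha d r S) (alpha d r T)" by (rule alpha_zadd)
  qed
  show "bij_betw (alpha d r) (vsp (H0gen d n r)) (vsp (C r))"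
    unfolding bij_betw_def
  proof (intro conjI)
    show "inj_on (alpha d r) (vsp (H0gen d n r))" using alpha_inj[OF d r] .
    show "alpha d r ` vsp (H0gen d n r) = vsp (C r)"
    proof
      show "alpha d r ` vsp (H0gen d n r) \<subseteq> vsp (C r)"
        unfolding alpha_def using Cv[OF r] lift_in_vsp by blast
      show "vsp (C r) \<subseteq> alpha d r ` vsp (H0gen d n r)"
      proof
        fix T assume "T \<in> vsp (C r)"
        then obtain v where v: "v \<in> vsp {..<n}" "Phi d r v = T" using Csurj[OF r] by blast
        have fv: "finite v" "v \<subseteq> {..<n}" using v unfolding vsp_def by auto
        have "pi d n r v \<in> vsp (H0gen d n r)" using pi_vsp[OF fv] .
        moreover have "alpha d r (pi d n r v) = T" using alpha_pi[OF d r v(1)] v by simp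
        ultimately show "T \<in> alpha d r ` vsp (H0gen d n r)" by blast
      qed
    qed
  qed
next
  fix r s :: real assume rs: "0 \<le> r \<and> r \<le> s"
  fix S assume S: "S \<in> vsp (H0gen d n r)"
  let ?v = "lift S"
  have v: "?v \<in> vsp {..<n}" using lift_in_vsp[OF S] .
  have fv: "finite ?v" "?v \<subseteq> {..<n}" using v unfolding vsp_def by auto
  have Sv: "S = pi d n r ?v" using pi_lift[OF S] by simp
  have "\<forall>i<n. vrcomp d n r i \<subseteq> vrcomp d n s i" using vrcomp_mono vredges_mono rs by blast
  then have "PH0rho d n r s S = pi d n s ?v" unfolding PH0rho_def using H0map_pi[OF fv] Sv by metis
  then have "alpha d s (PH0rho d n r s S) = Phi d s ?v" using alpha_pi[OF d _ v] rs by simp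
  also have "\<dots> = Phi d r ?v \<inter> C s" using Cres rs v by blast
  also have "\<dots> = \<sigma> r s (alpha d r S)" unfolding alpha_def sig ..
  finally show "alpha d s (PH0rho d n r s S) = \<sigma> r s (alpha d r S)" .
qed

lemma alpha_x_piso: "is_piso (H0gen dx n) (PH0rho dx n) (blk_dom MM) (blk_dom_rho MM) (alpha dx)"
proof (rule alpha_piso[where C = "blk_dom MM"])
  show "dx \<in> {dx, dz}" by simp
  show "\<And>r v. 0 \<le> r \<Longrightarrow> v \<in> vsp {..<n} \<Longrightarrow> Phi dx r v \<in> vsp (blk_dom MM r)" by (rule Phi_vsp(1))
  show "\<And>r T. 0 \<le> r \<Longrightarrow> T \<in> vsp (blk_dom MM r) \<Longrightarrow> \<exists>v\<in>vsp {..<n}. Phi dx r v = T" by (rule Phi_surj)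
  show "\<And>r s v. 0 \<le> r \<Longrightarrow> r \<le> s \<Longrightarrow> v \<in> vsp {..<n} \<Longrightarrow> Phi dx s v = Phi dx r v \<inter> blk_dom MM s"
    by (rule Phi_restrict(1))
  show "\<And>r s T. blk_dom_rho MM r s T = T \<inter> blk_dom MM s" by (simp add: blk_dom_rho_def)
qed

lemma alpha_z_piso: "is_piso (H0gen dz n) (PH0rho dz n) (blk_cod MM) (blk_cod_rho MM) (alpha dz)"
proof (rule alpha_piso[where C = "blk_cod MM"])
  show "dz \<in> {dx, dz}" by simp
  show "\<And>r v. 0 \<le> r \<Longrightarrow> v \<in> vsp {..<n} \<Longrightarrow> Phi dz r v \<in> vsp (blk_cod MM r)" by (rule Phi_vsp(2))
  show "\<And>r T. 0 \<le> r \<Longrightarrow> T \<in> vsp (blk_cod MM r) \<Longrightarrow> \<exists>v\<in>vsp {..<n}. Phi dz r v = T" by (rule Phi_surj_cod)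
  show "\<And>r s v. 0 \<le> r \<Longrightarrow> r \<le> s \<Longrightarrow> v \<in> vsp {..<n} \<Longrightarrow> Phi dz s v = Phi dz r v \<inter> blk_cod MM s"
    by (rule Phi_restrict(2))
  show "\<And>r s T. blk_cod_rho MM r s T = T \<inter> blk_cod MM s" by (simp add: blk_cod_rho_def)
qed

lemma main_comm:
  assumes edges: "\<And>r. vredges dx n r \<subseteq> vredges dz n r"
    and r: "0 \<le> r" and S: "S \<in> vsp (H0gen dx n r)"
  shows "alpha dz r (H0map dz n r S) = blk_mor MM r (alpha dx r S)"
proof -
  let ?v = "lift S"
  have v: "?v \<in> vsp {..<n}" using lift_in_vsp[OF S] .
  have fv: "finite ?v" "?v \<subseteq> {..<n}" using v unfolding vsp_def by auto
  have Sv: "S = pi dx n r ?v" using pi_lift[OF S] by simp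
  have "\<forall>i<n. vrcomp dx n r i \<subseteq> vrcomp dz n r i" using vrcomp_mono edges by blast
  then have "H0map dz n r S = pi dz n r ?v" using H0map_pi[OF fv] Sv by metis
  then have "alpha dz r (H0map dz n r S) = Phi dz r ?v" using alpha_pi[OF _ r v] by simp
  also have "\<dots> = Phi dx r ?v \<inter> blk_cod MM r" using Phi_restrict(3)[OF r order_refl v] .
  also have "\<dots> = blk_mor MM r (alpha dx r S)" unfolding blk_mor_def alpha_def ..
  finally show ?thesis .
qed

end



theorem lemma2:
  fixes n :: nat and dX dZ :: "nat \<Rightarrow> nat \<Rightarrow> real"
  assumes "n \<ge> 1"
    and "\<forall>i<n. \<forall>j<n. dX i j = dX j i \<and> dX i j \<ge> 0"
    and "\<forall>i<n. \<forall>j<n. dZ i j = dZ j i \<and> dZ i j \<ge> 0"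
  shows "\<exists>\<delta>0\<ge>0. \<forall>\<delta>\<ge>\<delta>0.
     (let dXd = (\<lambda>i j. dX i j + \<delta>) in
       (\<forall>r\<ge>0. \<forall>i<n. \<forall>j<n. j \<in> vrcomp dXd n r i \<longrightarrow> j \<in> vrcomp dZ n r i) \<and>
       is_pmor (H0gen dXd n) (PH0rho dXd n) (H0gen dZ n) (PH0rho dZ n) (\<lambda>r. H0map dZ n r) \<and>
       pmor_isomorphic (H0gen dXd n) (PH0rho dXd n) (H0gen dZ n) (PH0rho dZ n) (\<lambda>r. H0map dZ n r)
         (blk_dom (block_fun dXd dZ n)) (blk_dom_rho (block_fun dXd dZ n))
         (blk_cod (block_fun dXd dZ n)) (blk_cod_rho (block_fun dXd dZ n))
         (blk_mor (block_fun dXd dZ n)))"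
proof -
  have n: "0 < n" using assms(1) by simp
  have nnz: "\<forall>i<n. \<forall>j<n. dZ i j \<ge> 0" using assms(3) by simp
  define \<delta>0 where "\<delta>0 = Max (LL dZ n) + 1"
  have M0: "0 \<le> Max (LL dZ n)" using finite_LL by (intro Max_ge) (auto simp: LL_def)
  have LZ: "x \<le> Max (LL dZ n)" if "x \<in> LL dZ n" for x using finite_LL that by (intro Max_ge)
  have "\<delta>0 \<ge> 0" using M0 unfolding \<delta>0_def by simp
  moreover have "let dXd = (\<lambda>i j. dX i j + \<delta>) in
       (\<forall>r\<ge>0. \<forall>i<n. \<forall>j<n. j \<in> vrcomp dXd n r i \<longrightarrow> j \<in> vrcomp dZ n r i) \<and>
       is_pmor (H0gen dXd n) (PH0rho dXd n) (H0gen dZ n) (PH0rho dZ n) (\<lambda>r. H0map dZ n r) \<and>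
       pmor_isomorphic (H0gen dXd n) (PH0rho dXd n) (H0gen dZ n) (PH0rho dZ n) (\<lambda>r. H0map dZ n r)
         (blk_dom (block_fun dXd dZ n)) (blk_dom_rho (block_fun dXd dZ n))
         (blk_cod (block_fun dXd dZ n)) (blk_cod_rho (block_fun dXd dZ n))
         (blk_mor (block_fun dXd dZ n))" if del: "\<delta> \<ge> \<delta>0" for \<delta>
  proof -
    define dXd where "dXd = (\<lambda>i j. dX i j + \<delta>)"
    have dpos: "Max (LL dZ n) < \<delta>" using del unfolding \<delta>0_def by simp
    have nnx: "\<forall>i<n. \<forall>j<n. dXd i j \<ge> 0" unfolding dXd_def using assms(2) dpos M0 by fastforce
    have Zlt: "dZ i j < \<delta>" if "i < n" "j < n" for i j
    proof -
      have "dZ i j \<in> LL dZ n" unfolding LL_def using that by auto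
      then show ?thesis using LZ dpos by fastforce
    qed
    have Xge: "\<delta> \<le> dXd i j" if "i < n" "j < n" for i j
      unfolding dXd_def using assms(2) that by simp
    have edges: "vredges dXd n r \<subseteq> vredges dZ n r" for r
    proof
      fix e assume "e \<in> vredges dXd n r"
      then obtain i j where e: "e = (i, j)" "i < n" "j < n" "i \<noteq> j" "dXd i j \<le> r" "r > 0"
        unfolding vredges_def gedges_def by (auto split: if_splits)
      then have "dZ i j \<le> r" using Zlt[of i j] Xge[of i j] by simp
      then show "e \<in> vredges dZ n r" using e unfolding vredges_def gedges_def by auto
    qed
    have comp: "\<forall>i<n. vrcomp dXd n r i \<subseteq> vrcomp dZ n r i" for r using vrcomp_mono[OF edges] by blast
    obtain B where Bb: "B \<in> bases n" and adx: "adapted dXd n B" and adz: "adapted dZ n B"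
      using exists_adapted_basis[OF n nnx nnz] by blast
    have ker0: "ker_plus dXd n 0 = {{}}"
    proof -
      have "gedges dXd n 0 = {}" unfolding gedges_def using Xge dpos M0 by fastforce
      then have "\<not> gconn dXd n 0 i j" if "i \<noteq> j" for i j unfolding gconn_def using that by simp
      then have "pairs dXd n 0 = {}" unfolding pairs_def by blast
      then show ?thesis unfolding ker_plus_pairs by simp
    qed
    have le: "\<forall>w\<in>B. dval dZ n w \<le> dval dXd n w"
    proof
      fix w assume wB: "w \<in> B"
      have wE: "w \<in> EE n" using wB Bb unfolding bases_def by auto
      have "w \<noteq> {}"
      proof
        assume "w = {}"
        then have "zsum {w} = {}" by simp
        moreover have "{w} \<subseteq> B" using wB by simp
        ultimately show False using Bb unfolding bases_def indep_def by blast
      qed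
      have "dval dZ n w \<in> LL dZ n" using dval_in(1)[OF wE] .
      then have z: "dval dZ n w < \<delta>" using LZ dpos by fastforce
      have "dval dXd n w \<in> LL dXd n" using dval_in(1)[OF wE] .
      then consider "dval dXd n w = 0" | i j where "i < n" "j < n" "dval dXd n w = dXd i j"
        unfolding LL_def by auto
      then have "\<delta> \<le> dval dXd n w"
      proof cases
        case 1
        then have "w \<in> ker_plus dXd n 0" using dval_in(2)[OF wE, of dXd] by simp
        then show ?thesis using ker0 \<open>w \<noteq> {}\<close> by simp
      next
        case 2 then show ?thesis using Xge by simp
      qed
      then show "dval dZ n w \<le> dval dXd n w" using z by simp
    qed
    interpret S: blkset n dXd dZ B
      by unfold_locales (use n nnx nnz Bb adx adz le in auto)
    have MM: "S.MM = block_fun dXd dZ n" unfolding S.MM_def ..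
    have part1: "\<forall>r\<ge>0. \<forall>i<n. \<forall>j<n. j \<in> vrcomp dXd n r i \<longrightarrow> j \<in> vrcomp dZ n r i"
      using comp by blast
    have part2: "is_pmor (H0gen dXd n) (PH0rho dXd n) (H0gen dZ n) (PH0rho dZ n) (\<lambda>r. H0map dZ n r)"
      unfolding is_pmor_def
    proof (intro conjI allI impI ballI)
      fix r :: real assume "0 \<le> r"
      show "zlinear (H0gen dXd n r) (H0gen dZ n r) (H0map dZ n r)"
        using zlinear_H0map comp by blast
    next
      fix r s :: real and Sx assume rs: "0 \<le> r \<and> r \<le> s" and Sx: "Sx \<in> vsp (H0gen dXd n r)"
      let ?v = "lift Sx"
      have fv: "finite ?v" "?v \<subseteq> {..<n}" using lift_vsp[OF Sx] by auto
      have Sv: "Sx = pi dXd n r ?v" using pi_lift[OF Sx] by simp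
      have c1: "\<forall>i<n. vrcomp dXd n r i \<subseteq> vrcomp dXd n s i" using vrcomp_mono vredges_mono rs by blast
      have c2: "\<forall>i<n. vrcomp dXd n s i \<subseteq> vrcomp dZ n s i" using comp by blast
      have c3: "\<forall>i<n. vrcomp dZ n r i \<subseteq> vrcomp dZ n s i" using vrcomp_mono vredges_mono rs by blast
      have "H0map dZ n s (PH0rho dXd n r s Sx) = H0map dZ n s (pi dXd n s ?v)"
        unfolding PH0rho_def using H0map_pi[OF fv c1] Sv by metis
      also have "\<dots> = pi dZ n s ?v" using H0map_pi[OF fv c2] .
      also have "\<dots> = H0map dZ n s (pi dZ n r ?v)" using H0map_pi[OF fv c3] by simp
      also have "pi dZ n r ?v = H0map dZ n r Sx" using H0map_pi[OF fv comp] Sv by metis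
      finally show "H0map dZ n s (PH0rho dXd n r s Sx) = PH0rho dZ n r s (H0map dZ n r Sx)"
        unfolding PH0rho_def .
    qed
    have part3: "pmor_isomorphic (H0gen dXd n) (PH0rho dXd n) (H0gen dZ n) (PH0rho dZ n) (\<lambda>r. H0map dZ n r)
         (blk_dom (block_fun dXd dZ n)) (blk_dom_rho (block_fun dXd dZ n))
         (blk_cod (block_fun dXd dZ n)) (blk_cod_rho (block_fun dXd dZ n))
         (blk_mor (block_fun dXd dZ n))"
      unfolding pmor_isomorphic_def
    proof (intro exI conjI)
      show "is_piso (H0gen dXd n) (PH0rho dXd n) (blk_dom (block_fun dXd dZ n)) (blk_dom_rho (block_fun dXd dZ n)) (S.alpha dXd)"
        using S.alpha_x_piso unfolding MM .
      show "is_piso (H0gen dZ n) (PH0rho dZ n) (blk_cod (block_fun dXd dZ n)) (blk_cod_rho (block_fun dXd dZ n)) (S.alpha dZ)"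
        using S.alpha_z_piso unfolding MM .
      show "\<forall>r\<ge>0. \<forall>Sx\<in>vsp (H0gen dXd n r). S.alpha dZ r (H0map dZ n r Sx) = blk_mor (block_fun dXd dZ n) r (S.alpha dXd r Sx)"
        using S.main_comm[OF edges] unfolding MM by blast
    qed
    show ?thesis unfolding Let_def dXd_def[symmetric] using part1 part2 part3 by blast
  qed
  ultimately show ?thesis by blast
qed


end
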